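(* There exists a $(39,3)$-arc in $\operatorname{PG}(2,25)$; hence $m_3(2,25)\ge 39$.
   Context: Points of $\operatorname{PG}(2,q)$ are the 1-dimensional subspaces of $\operatorname{GF}(q)^3$, lines are the 2-dimensional subspaces. An $(n,r)$-arc in $\operatorname{PG}(2,q)$ is a set $\mathcal B$ of $n$ points such that every line contains at most $r$ points of $\mathcal B$ and at least one line contains exactly $r$ points of $\mathcal B$. $m_r(2,q)$ is the maximum $n$ for which an $(n,r)$-arc in $\operatorname{PG}(2,q)$ exists. *)

theory Defs
  imports Main
begin

type_synonym 'a vec3 = "'a \<times> 'a \<times> 'a"

definition zero3 :: "'a::field vec3" where
  "zero3 = (0, 0, 0)"

definition smult3 :: "'a::field \<Rightarrow> 'a vec3 \<Rightarrow> 'a vec3" where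
  "smult3 c v = (case v of (x, y, z) \<Rightarrow> (c * x, c * y, c * z))"

definition add3 :: "'a::field vec3 \<Rightarrow> 'a vec3 \<Rightarrow> 'a vec3" where
  "add3 u v = (case u of (x, y, z) \<Rightarrow> case v of (x', y', z') \<Rightarrow> (x + x', y + y', z + z'))"

definition span1 :: "'a::field vec3 \<Rightarrow> 'a vec3 set" where
  "span1 v = {smult3 c v | c. True}"

definition span2 :: "'a::field vec3 \<Rightarrow> 'a vec3 \<Rightarrow> 'a vec3 set" where
  "span2 u w = {add3 (smult3 a u) (smult3 b w) | a b. True}"

definition pg_points :: "'a::field vec3 set set" where
  "pg_points = {span1 v | v. v \<noteq> zero3}"

definition pg_lines :: "'a::field vec3 set set" where
  "pg_lines = {span2 u w | u w. u \<noteq> zero3 \<and> w \<notin> span1 u}"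

definition is_arc :: "nat \<Rightarrow> nat \<Rightarrow> 'a::field vec3 set set \<Rightarrow> bool" where
  "is_arc n r B \<longleftrightarrow> B \<subseteq> pg_points \<and> finite B \<and> card B = n
     \<and> (\<forall>L\<in>pg_lines. card {P\<in>B. P \<subseteq> L} \<le> r)
     \<and> (\<exists>L\<in>pg_lines. card {P\<in>B. P \<subseteq> L} = r)"

definition arc_max :: "nat \<Rightarrow> 'a::field itself \<Rightarrow> nat" where
  "arc_max r _ = Sup {n. \<exists>B :: 'a vec3 set set. is_arc n r B}"

end

theory Submission imports Defs "HOL-Number_Theory.Number_Theory" begin


lemma char5:
  assumes "card (UNIV :: 'a::{field,finite} set) = 25"
  shows "CHAR('a) = 5"
proof -
  have pos: "CHAR('a) > 0" by (simp add: finite_imp_CHAR_pos)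
  have pr: "prime CHAR('a)" using prime_CHAR_semidom[OF pos] .
  have "CHAR('a) dvd 25" using CHAR_dvd_CARD[where 'a='a] assms by simp
  then have "CHAR('a) dvd 5^2" by simp
  then have "CHAR('a) dvd 5" using pr prime_dvd_power_nat by blast
  moreover have "prime (5::nat)" by simp
  ultimately show ?thesis using pr primes_dvd_imp_eq[of "CHAR('a)" 5] by simp
qed

lemma ofnat_eq5:
  assumes "CHAR('a::field) = 5"
  shows "(of_nat m :: 'a) = of_nat n \<longleftrightarrow> m mod 5 = n mod 5"
  using of_nat_eq_iff_cong_CHAR[where 'a='a] assms by (simp add: cong_def)

lemma pow4_mod5: "(t::nat) mod 5 \<noteq> 0 \<Longrightarrow> t^4 mod 5 = 1"
proof -
  assume h: "t mod 5 \<noteq> 0"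
  have "t^4 mod 5 = (t mod 5)^4 mod 5" by (simp add: power_mod)
  moreover have "t mod 5 = 1 \<or> t mod 5 = 2 \<or> t mod 5 = 3 \<or> t mod 5 = 4" using h by arith
  ultimately show ?thesis by auto
qed

lemma exists_w:
  assumes card: "card (UNIV :: 'a::{field,finite} set) = 25" and ch: "CHAR('a) = 5"
  shows "\<exists>w::'a. w * w = 2"
proof -
  have eq: "\<And>m n. (of_nat m :: 'a) = of_nat n \<longleftrightarrow> m mod 5 = n mod 5"
    using ofnat_eq5[OF ch] .
  have mod5: "\<And>n. (of_nat (n mod 5) :: 'a) = of_nat n" by (subst eq) simp
  have F: "range (of_nat :: nat \<Rightarrow> 'a) = of_nat ` {..<5}"
  proof
    show "range (of_nat :: nat \<Rightarrow> 'a) \<subseteq> of_nat ` {..<5}"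
    proof
      fix x assume "x \<in> range (of_nat :: nat \<Rightarrow> 'a)"
      then obtain n where "x = of_nat n" by auto
      then have "x = of_nat (n mod 5)" using eq by simp
      then show "x \<in> of_nat ` {..<5}" by auto
    qed
  qed auto
  have "card (range (of_nat :: nat \<Rightarrow> 'a)) \<le> 5"
    unfolding F using card_image_le[of "{..<5::nat}" "of_nat :: nat \<Rightarrow> 'a"] by simp
  then have "range (of_nat :: nat \<Rightarrow> 'a) \<noteq> UNIV" using card by auto
  then obtain w0 :: 'a where w0: "\<And>k. w0 \<noteq> of_nat k" by blast
  define \<psi> where "\<psi> = (\<lambda>(a,b). (of_nat a + of_nat b * w0 :: 'a))"
  have inFact: "\<And>t c. t mod 5 \<noteq> 0 \<Longrightarrow> w0 * of_nat t = of_nat c \<Longrightarrow> False"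
  proof -
    fix t c assume t: "t mod 5 \<noteq> 0" and h: "w0 * of_nat t = (of_nat c :: 'a)"
    have t4: "t^4 mod 5 = 1 mod 5" using pow4_mod5[OF t] by simp
    have "(of_nat (t^4) :: 'a) = of_nat 1" by (subst eq) (rule t4)
    then have "w0 = w0 * of_nat (t^4)" by simp
    also have "\<dots> = (w0 * of_nat t) * of_nat (t^3)"
      by (simp add: power_numeral_reduce mult.assoc)
    also have "\<dots> = of_nat (c * t^3)" using h by simp
    finally show False using w0 by blast
  qed
  have inj: "inj_on \<psi> ({..<5} \<times> {..<5})"
  proof (rule inj_onI)
    fix p q assume p: "p \<in> {..<5::nat} \<times> {..<5::nat}" and q: "q \<in> {..<5::nat} \<times> {..<5::nat}"
      and e: "\<psi> p = \<psi> q"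
    obtain a b where ab: "p = (a,b)" by (cases p)
    obtain c d where cd: "q = (c,d)" by (cases q)
    have lt: "a < 5" "b < 5" "c < 5" "d < 5" using p q ab cd by auto
    have e2: "of_nat a + of_nat b * w0 = (of_nat c + of_nat d * w0 :: 'a)"
      using e ab cd by (simp add: \<psi>_def)
    show "p = q"
    proof (cases "b = d")
      case True
      then have "(of_nat a :: 'a) = of_nat c" using e2 by simp
      then have "a = c" using eq lt by simp
      then show ?thesis using ab cd True by simp
    next
      case False
      have "w0 * of_nat (b + 5 - d) = w0 * (of_nat b - of_nat d + of_nat 5)"
        using lt by (simp add: of_nat_diff)
      also have "\<dots> = w0 * (of_nat b - of_nat d)" using eq[of 5 0] by simp
      also have "\<dots> = of_nat c - of_nat a" using e2 by (simp add: algebra_simps)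
      also have "\<dots> = of_nat c - of_nat a + of_nat 5" using eq[of 5 0] by simp
      also have "\<dots> = of_nat (c + 5 - a)" using lt by (simp add: of_nat_diff)
      finally have "w0 * of_nat (b + 5 - d) = (of_nat (c + 5 - a) :: 'a)" .
      moreover have "(b + 5 - d) mod 5 \<noteq> 0" using lt False by arith
      ultimately show ?thesis using inFact by blast
    qed
  qed
  have "card (\<psi> ` ({..<5} \<times> {..<5})) = 25" using card_image[OF inj] by simp
  then have all: "\<psi> ` ({..<5} \<times> {..<5}) = UNIV" using card
    by (intro card_subset_eq) auto
  have "w0 * w0 \<in> \<psi> ` ({..<5} \<times> {..<5})" unfolding all by simp
  then obtain p where p: "p \<in> {..<5::nat} \<times> {..<5::nat}" "w0 * w0 = \<psi> p" by blast
  obtain a b where pab: "p = (a,b)" by (cases p)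
  have ab: "a < 5" "b < 5" using p pab by auto
  have sq: "w0 * w0 = of_nat a + of_nat b * w0" using p pab by (simp add: \<psi>_def)
  define u where "u = w0 + of_nat (2*b)"
  have five: "(of_nat 5 :: 'a) = 0" using eq[of 5 0] by simp
  have "u * u = of_nat a + of_nat b * w0 + of_nat (4*b) * w0 + of_nat (4*b*b)"
    unfolding u_def using sq by (simp add: algebra_simps)
  also have "\<dots> = of_nat (a + 4*b*b) + of_nat 5 * (of_nat b * w0)"
    by (simp add: algebra_simps)
  also have "\<dots> = of_nat (a + 4*b*b)" using five by simp
  finally have uu: "u * u = of_nat (a + 4*b*b)" .
  have uF: "\<And>k. u \<noteq> of_nat k"
  proof
    fix k assume "u = of_nat k"
    then have "w0 = of_nat k - of_nat (2*b)" unfolding u_def by (simp add: eq_diff_eq)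
    also have "\<dots> = of_nat k - of_nat (2*b) + of_nat 5 * of_nat b" using five by simp
    also have "\<dots> = of_nat (k + 3*b)" by (simp add: algebra_simps)
    finally show False using w0 by blast
  qed
  define r where "r = (a + 4*b*b) mod 5"
  have uur: "u * u = of_nat r" unfolding r_def mod5 by (rule uu)
  have notsq: "r \<noteq> (k*k) mod 5" for k
  proof
    assume "r = (k*k) mod 5"
    then have "(of_nat r :: 'a) = of_nat (k*k)" by (subst eq) simp
    then have "u * u = of_nat k * of_nat k" using uur by simp
    then have "(u - of_nat k) * (u + of_nat k) = 0" by (simp add: algebra_simps)
    then have "u = of_nat k \<or> u = - of_nat k" by (simp add: eq_neg_iff_add_eq_0)
    moreover have "- (of_nat k :: 'a) = of_nat (4*k)"
      using five by (simp add: eq_neg_iff_add_eq_0 algebra_simps)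
    ultimately show False using uF[of k] uF[of "4*k"] by metis
  qed
  have "r < 5" unfolding r_def by simp
  moreover have "r \<noteq> 0" "r \<noteq> 1" "r \<noteq> 4" using notsq[of 0] notsq[of 1] notsq[of 2] by auto
  ultimately have "r = 2 \<or> r = 3" by arith
  then show ?thesis
  proof
    assume "r = 2" then show ?thesis using uur by auto
  next
    assume r3: "r = 3"
    have "(2*u) * (2*u) = 4 * (u * u)" by (simp add: algebra_simps)
    also have "\<dots> = 4 * of_nat 3" using uur r3 by simp
    also have "\<dots> = (of_nat 12 :: 'a)" by simp
    also have "\<dots> = of_nat 2" by (subst eq) simp
    finally have h: "(2*u) * (2*u) = (of_nat 2 :: 'a)" .
    show ?thesis by (rule exI[of _ "2*u"]) (use h in simp)
  qed
qed




definition dot3 :: "'a::field vec3 \<Rightarrow> 'a vec3 \<Rightarrow> 'a" where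
  "dot3 u v = (case u of (a,b,c) \<Rightarrow> case v of (x,y,z) \<Rightarrow> a*x+b*y+c*z)"
definition cross3 :: "'a::field vec3 \<Rightarrow> 'a vec3 \<Rightarrow> 'a vec3" where
  "cross3 u v = (case u of (a,b,c) \<Rightarrow> case v of (x,y,z) \<Rightarrow> (b*z - c*y, c*x - a*z, a*y - b*x))"

lemma mem_span2_dot:
  fixes u w v :: "'a::field vec3"
  assumes "v \<in> span2 u w" shows "dot3 (cross3 u w) v = 0"
proof -
  obtain a b where v: "v = add3 (smult3 a u) (smult3 b w)" using assms by (auto simp: span2_def)
  obtain u1 u2 u3 where u: "u = (u1,u2,u3)" by (cases u) auto
  obtain w1 w2 w3 where w: "w = (w1,w2,w3)" by (cases w) auto
  show ?thesis unfolding v u w by (simp add: dot3_def cross3_def add3_def smult3_def algebra_simps)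
qed

lemma self_span1: "v \<in> span1 (v::'a::field vec3)"
  unfolding span1_def by (rule CollectI, rule exI[of _ 1]) (cases v, simp add: smult3_def)

lemma cross_nz:
  fixes u w :: "'a::field vec3"
  assumes "u \<noteq> zero3" "w \<notin> span1 u" shows "cross3 u w \<noteq> zero3"
proof
  assume c: "cross3 u w = zero3"
  obtain u1 u2 u3 where u: "u = (u1,u2,u3)" by (cases u) auto
  obtain w1 w2 w3 where w: "w = (w1,w2,w3)" by (cases w) auto
  have e1: "u2*w3 = u3*w2" and e2: "u3*w1 = u1*w3" and e3: "u1*w2 = u2*w1"
    using c unfolding u w by (simp_all add: cross3_def zero3_def)
  have "\<exists>c. w = smult3 c u"
  proof (cases "u1 \<noteq> 0")
    case True
    show ?thesis
      by (rule exI[of _ "w1/u1"]) (use True e1 e2 e3 in \<open>simp add: u w smult3_def field_simps\<close>)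
  next
    case F1: False
    show ?thesis
    proof (cases "u2 \<noteq> 0")
      case True
      show ?thesis
        by (rule exI[of _ "w2/u2"]) (use True F1 e1 e2 e3 in \<open>simp add: u w smult3_def field_simps\<close>)
    next
      case False
      then have "u3 \<noteq> 0" using F1 assms(1) u by (auto simp: zero3_def)
      then show ?thesis
        by (intro exI[of _ "w3/u3"]) (use False F1 e1 e2 e3 in \<open>simp add: u w smult3_def field_simps\<close>)
    qed
  qed
  then have "w \<in> span1 u" unfolding span1_def by auto
  with assms(2) show False by simp
qed

lemma normalize3:
  fixes n :: "'a::field vec3"
  assumes "n \<noteq> zero3"
  shows "(\<exists>a b. \<forall>v. dot3 n v = 0 \<longleftrightarrow> dot3 (1,a,b) v = 0) \<or>
         (\<exists>b. \<forall>v. dot3 n v = 0 \<longleftrightarrow> dot3 (0,1,b) v = 0) \<or>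
         (\<forall>v. dot3 n v = 0 \<longleftrightarrow> dot3 (0,0,1) v = 0)"
proof -
  obtain n1 n2 n3 where n: "n = (n1,n2,n3)" by (cases n) auto
  have dd: "dot3 n v = n1 * fst v + n2 * fst (snd v) + n3 * snd (snd v)" for v
    unfolding n by (cases v) (auto simp: dot3_def)
  have dd': "dot3 (p,q,r) v = p * fst v + q * fst (snd v) + r * snd (snd v)" for p q r v
    by (cases v) (auto simp: dot3_def)
  show ?thesis
  proof (cases "n1 \<noteq> 0")
    case True
    have "dot3 n v = n1 * dot3 (1, n2/n1, n3/n1) v" for v
      unfolding dd dd' using True by (simp add: field_simps)
    then show ?thesis using True by auto
  next
    case F1: False
    show ?thesis
    proof (cases "n2 \<noteq> 0")
      case True
      have "dot3 n v = n2 * dot3 (0, 1, n3/n2) v" for v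
        unfolding dd dd' using True F1 by (simp add: field_simps)
      then show ?thesis using True by auto
    next
      case False
      then have n3: "n3 \<noteq> 0" using F1 assms n by (auto simp: zero3_def)
      have "dot3 n v = n3 * dot3 (0, 0, 1) v" for v
        unfolding dd dd' using False F1 by (simp add: field_simps)
      then show ?thesis using n3 by auto
    qed
  qed
qed


datatype g = G0 | G1 | G2 | G3 | G4 | G5 | G6 | G7 | G8 | G9 | G10 | G11 | G12 | G13 | G14 | G15 | G16 | G17 | G18 | G19 | G20 | G21 | G22 | G23 | G24

definition tp :: "g \<Rightarrow> nat \<times> nat" where
  "tp x = (case x of G0 \<Rightarrow> (0,0) | G1 \<Rightarrow> (1,0) | G2 \<Rightarrow> (2,0) | G3 \<Rightarrow> (3,0) | G4 \<Rightarrow> (4,0) | G5 \<Rightarrow> (0,1) | G6 \<Rightarrow> (1,1) | G7 \<Rightarrow> (2,1) | G8 \<Rightarrow> (3,1) | G9 \<Rightarrow> (4,1) | G10 \<Rightarrow> (0,2) | G11 \<Rightarrow> (1,2) | G12 \<Rightarrow> (2,2) | G13 \<Rightarrow> (3,2) | G14 \<Rightarrow> (4,2) | G15 \<Rightarrow> (0,3) | G16 \<Rightarrow> (1,3) | G17 \<Rightarrow> (2,3) | G18 \<Rightarrow> (3,3) | G19 \<Rightarrow> (4,3) | G20 \<Rightarrow> (0,4) | G21 \<Rightarrow> (1,4) | G22 \<Rightarrow> (2,4) | G23 \<Rightarrow> (3,4) | G24 \<Rightarrow> (4,4))"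

definition gadd :: "g \<Rightarrow> g \<Rightarrow> g" where
  "gadd x y = (case x of G0 \<Rightarrow> (case y of G0 \<Rightarrow> G0 | G1 \<Rightarrow> G1 | G2 \<Rightarrow> G2 | G3 \<Rightarrow> G3 | G4 \<Rightarrow> G4 | G5 \<Rightarrow> G5 | G6 \<Rightarrow> G6 | G7 \<Rightarrow> G7 | G8 \<Rightarrow> G8 | G9 \<Rightarrow> G9 | G10 \<Rightarrow> G10 | G11 \<Rightarrow> G11 | G12 \<Rightarrow> G12 | G13 \<Rightarrow> G13 | G14 \<Rightarrow> G14 | G15 \<Rightarrow> G15 | G16 \<Rightarrow> G16 | G17 \<Rightarrow> G17 | G18 \<Rightarrow> G18 | G19 \<Rightarrow> G19 | G20 \<Rightarrow> G20 | G21 \<Rightarrow> G21 | G22 \<Rightarrow> G22 | G23 \<Rightarrow> G23 | G24 \<Rightarrow> G24) | G1 \<Rightarrow> (case y of G0 \<Rightarrow> G1 | G1 \<Rightarrow> G2 | G2 \<Rightarrow> G3 | G3 \<Rightarrow> G4 | G4 \<Rightarrow> G0 | G5 \<Rightarrow> G6 | G6 \<Rightarrow> G7 | G7 \<Rightarrow> G8 | G8 \<Rightarrow> G9 | G9 \<Rightarrow> G5 | G10 \<Rightarrow> G11 | G11 \<Rightarrow> G12 | G12 \<Rightarrow> G13 | G13 \<Rightarrow> G14 | G14 \<Rightarrow> G10 | G15 \<Rightarrow> G16 | G16 \<Rightarrow> G17 | G17 \<Rightarrow> G18 | G18 \<Rightarrow> G19 | G19 \<Rightarrow> G15 | G20 \<Rightarrow>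 G21 | G21 \<Rightarrow> G22 | G22 \<Rightarrow> G23 | G23 \<Rightarrow> G24 | G24 \<Rightarrow> G20) | G2 \<Rightarrow> (case y of G0 \<Rightarrow> G2 | G1 \<Rightarrow> G3 | G2 \<Rightarrow> G4 | G3 \<Rightarrow> G0 | G4 \<Rightarrow> G1 | G5 \<Rightarrow> G7 | G6 \<Rightarrow> G8 | G7 \<Rightarrow> G9 | G8 \<Rightarrow> G5 | G9 \<Rightarrow> G6 | G10 \<Rightarrow> G12 | G11 \<Rightarrow> G13 | G12 \<Rightarrow> G14 | G13 \<Rightarrow> G10 | G14 \<Rightarrow> G11 | G15 \<Rightarrow> G17 | G16 \<Rightarrow> G18 | G17 \<Rightarrow> G19 | G18 \<Rightarrow> G15 | G19 \<Rightarrow> G16 | G20 \<Rightarrow> G22 | G21 \<Rightarrow> G23 | G22 \<Rightarrow> G24 | G23 \<Rightarrow> G20 | G24 \<Rightarrow> G21) | G3 \<Rightarrow> (case y of G0 \<Rightarrow> G3 | G1 \<Rightarrow> G4 | G2 \<Rightarrow> G0 | G3 \<Rightarrow> G1 | G4 \<Rightarrow> G2 | G5 \<Rightarrow> G8 | G6 \<Rightarrow> G9 | G7 \<Rightarrow> G5 | G8 \<Rightarrow> G6 | G9 \<Rightarrow> G7 | G10 \<Rightarrow> G13 | G11 \<Rightarrow> G14 | G12 \<Rightarrow> G10 | G13 \<Rightarrow> G11 | G14 \<Rightarrow> G12 | G15 \<Rightarrow> G18 | G16 \<Rightarrow> G19 | G17 \<Rightarrow> G15 | G18 \<Rightarrow>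 G16 | G19 \<Rightarrow> G17 | G20 \<Rightarrow> G23 | G21 \<Rightarrow> G24 | G22 \<Rightarrow> G20 | G23 \<Rightarrow> G21 | G24 \<Rightarrow> G22) | G4 \<Rightarrow> (case y of G0 \<Rightarrow> G4 | G1 \<Rightarrow> G0 | G2 \<Rightarrow> G1 | G3 \<Rightarrow> G2 | G4 \<Rightarrow> G3 | G5 \<Rightarrow> G9 | G6 \<Rightarrow> G5 | G7 \<Rightarrow> G6 | G8 \<Rightarrow> G7 | G9 \<Rightarrow> G8 | G10 \<Rightarrow> G14 | G11 \<Rightarrow> G10 | G12 \<Rightarrow> G11 | G13 \<Rightarrow> G12 | G14 \<Rightarrow> G13 | G15 \<Rightarrow> G19 | G16 \<Rightarrow> G15 | G17 \<Rightarrow> G16 | G18 \<Rightarrow> G17 | G19 \<Rightarrow> G18 | G20 \<Rightarrow> G24 | G21 \<Rightarrow> G20 | G22 \<Rightarrow> G21 | G23 \<Rightarrow> G22 | G24 \<Rightarrow> G23) | G5 \<Rightarrow> (case y of G0 \<Rightarrow> G5 | G1 \<Rightarrow> G6 | G2 \<Rightarrow> G7 | G3 \<Rightarrow> G8 | G4 \<Rightarrow> G9 | G5 \<Rightarrow> G10 | G6 \<Rightarrow> G11 | G7 \<Rightarrow> G12 | G8 \<Rightarrow> G13 | G9 \<Rightarrow> G14 | G10 \<Rightarrow> G15 | G11 \<Rightarrow> G16 | G12 \<Rightarrow> G17 | G13 \<Rightarrow> G18 | G14 \<Rightarrow> G19 | G15 \<Rightarrow> G20 | G16 \<Rightarrow>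 G21 | G17 \<Rightarrow> G22 | G18 \<Rightarrow> G23 | G19 \<Rightarrow> G24 | G20 \<Rightarrow> G0 | G21 \<Rightarrow> G1 | G22 \<Rightarrow> G2 | G23 \<Rightarrow> G3 | G24 \<Rightarrow> G4) | G6 \<Rightarrow> (case y of G0 \<Rightarrow> G6 | G1 \<Rightarrow> G7 | G2 \<Rightarrow> G8 | G3 \<Rightarrow> G9 | G4 \<Rightarrow> G5 | G5 \<Rightarrow> G11 | G6 \<Rightarrow> G12 | G7 \<Rightarrow> G13 | G8 \<Rightarrow> G14 | G9 \<Rightarrow> G10 | G10 \<Rightarrow> G16 | G11 \<Rightarrow> G17 | G12 \<Rightarrow> G18 | G13 \<Rightarrow> G19 | G14 \<Rightarrow> G15 | G15 \<Rightarrow> G21 | G16 \<Rightarrow> G22 | G17 \<Rightarrow> G23 | G18 \<Rightarrow> G24 | G19 \<Rightarrow> G20 | G20 \<Rightarrow> G1 | G21 \<Rightarrow> G2 | G22 \<Rightarrow> G3 | G23 \<Rightarrow> G4 | G24 \<Rightarrow> G0) | G7 \<Rightarrow> (case y of G0 \<Rightarrow> G7 | G1 \<Rightarrow> G8 | G2 \<Rightarrow> G9 | G3 \<Rightarrow> G5 | G4 \<Rightarrow> G6 | G5 \<Rightarrow> G12 | G6 \<Rightarrow> G13 | G7 \<Rightarrow> G14 | G8 \<Rightarrow> G10 | G9 \<Rightarrow> G11 | G10 \<Rightarrow> G17 | G11 \<Rightarrow> G18 | G12 \<Rightarrow> G19 | G13 \<Rightarrow> G15 | G14 \<Rightarrow>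 G16 | G15 \<Rightarrow> G22 | G16 \<Rightarrow> G23 | G17 \<Rightarrow> G24 | G18 \<Rightarrow> G20 | G19 \<Rightarrow> G21 | G20 \<Rightarrow> G2 | G21 \<Rightarrow> G3 | G22 \<Rightarrow> G4 | G23 \<Rightarrow> G0 | G24 \<Rightarrow> G1) | G8 \<Rightarrow> (case y of G0 \<Rightarrow> G8 | G1 \<Rightarrow> G9 | G2 \<Rightarrow> G5 | G3 \<Rightarrow> G6 | G4 \<Rightarrow> G7 | G5 \<Rightarrow> G13 | G6 \<Rightarrow> G14 | G7 \<Rightarrow> G10 | G8 \<Rightarrow> G11 | G9 \<Rightarrow> G12 | G10 \<Rightarrow> G18 | G11 \<Rightarrow> G19 | G12 \<Rightarrow> G15 | G13 \<Rightarrow> G16 | G14 \<Rightarrow> G17 | G15 \<Rightarrow> G23 | G16 \<Rightarrow> G24 | G17 \<Rightarrow> G20 | G18 \<Rightarrow> G21 | G19 \<Rightarrow> G22 | G20 \<Rightarrow> G3 | G21 \<Rightarrow> G4 | G22 \<Rightarrow> G0 | G23 \<Rightarrow> G1 | G24 \<Rightarrow> G2) | G9 \<Rightarrow> (case y of G0 \<Rightarrow> G9 | G1 \<Rightarrow> G5 | G2 \<Rightarrow> G6 | G3 \<Rightarrow> G7 | G4 \<Rightarrow> G8 | G5 \<Rightarrow> G14 | G6 \<Rightarrow> G10 | G7 \<Rightarrow> G11 | G8 \<Rightarrow> G12 | G9 \<Rightarrow> G13 | G10 \<Rightarrow> G19 | G11 \<Rightarrow> G15 | G12 \<Rightarrow>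 G16 | G13 \<Rightarrow> G17 | G14 \<Rightarrow> G18 | G15 \<Rightarrow> G24 | G16 \<Rightarrow> G20 | G17 \<Rightarrow> G21 | G18 \<Rightarrow> G22 | G19 \<Rightarrow> G23 | G20 \<Rightarrow> G4 | G21 \<Rightarrow> G0 | G22 \<Rightarrow> G1 | G23 \<Rightarrow> G2 | G24 \<Rightarrow> G3) | G10 \<Rightarrow> (case y of G0 \<Rightarrow> G10 | G1 \<Rightarrow> G11 | G2 \<Rightarrow> G12 | G3 \<Rightarrow> G13 | G4 \<Rightarrow> G14 | G5 \<Rightarrow> G15 | G6 \<Rightarrow> G16 | G7 \<Rightarrow> G17 | G8 \<Rightarrow> G18 | G9 \<Rightarrow> G19 | G10 \<Rightarrow> G20 | G11 \<Rightarrow> G21 | G12 \<Rightarrow> G22 | G13 \<Rightarrow> G23 | G14 \<Rightarrow> G24 | G15 \<Rightarrow> G0 | G16 \<Rightarrow> G1 | G17 \<Rightarrow> G2 | G18 \<Rightarrow> G3 | G19 \<Rightarrow> G4 | G20 \<Rightarrow> G5 | G21 \<Rightarrow> G6 | G22 \<Rightarrow> G7 | G23 \<Rightarrow> G8 | G24 \<Rightarrow> G9) | G11 \<Rightarrow> (case y of G0 \<Rightarrow> G11 | G1 \<Rightarrow> G12 | G2 \<Rightarrow> G13 | G3 \<Rightarrow> G14 | G4 \<Rightarrow> G10 | G5 \<Rightarrow> G16 | G6 \<Rightarrow> G17 | G7 \<Rightarrow> G18 | G8 \<Rightarrow> G19 | G9 \<Rightarrow> G15 | G10 \<Rightarrow>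 G21 | G11 \<Rightarrow> G22 | G12 \<Rightarrow> G23 | G13 \<Rightarrow> G24 | G14 \<Rightarrow> G20 | G15 \<Rightarrow> G1 | G16 \<Rightarrow> G2 | G17 \<Rightarrow> G3 | G18 \<Rightarrow> G4 | G19 \<Rightarrow> G0 | G20 \<Rightarrow> G6 | G21 \<Rightarrow> G7 | G22 \<Rightarrow> G8 | G23 \<Rightarrow> G9 | G24 \<Rightarrow> G5) | G12 \<Rightarrow> (case y of G0 \<Rightarrow> G12 | G1 \<Rightarrow> G13 | G2 \<Rightarrow> G14 | G3 \<Rightarrow> G10 | G4 \<Rightarrow> G11 | G5 \<Rightarrow> G17 | G6 \<Rightarrow> G18 | G7 \<Rightarrow> G19 | G8 \<Rightarrow> G15 | G9 \<Rightarrow> G16 | G10 \<Rightarrow> G22 | G11 \<Rightarrow> G23 | G12 \<Rightarrow> G24 | G13 \<Rightarrow> G20 | G14 \<Rightarrow> G21 | G15 \<Rightarrow> G2 | G16 \<Rightarrow> G3 | G17 \<Rightarrow> G4 | G18 \<Rightarrow> G0 | G19 \<Rightarrow> G1 | G20 \<Rightarrow> G7 | G21 \<Rightarrow> G8 | G22 \<Rightarrow> G9 | G23 \<Rightarrow> G5 | G24 \<Rightarrow> G6) | G13 \<Rightarrow> (case y of G0 \<Rightarrow> G13 | G1 \<Rightarrow> G14 | G2 \<Rightarrow> G10 | G3 \<Rightarrow> G11 | G4 \<Rightarrow> G12 | G5 \<Rightarrow> G18 | G6 \<Rightarrow> G19 | G7 \<Rightarrow> G15 | G8 \<Rightarrow>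 G16 | G9 \<Rightarrow> G17 | G10 \<Rightarrow> G23 | G11 \<Rightarrow> G24 | G12 \<Rightarrow> G20 | G13 \<Rightarrow> G21 | G14 \<Rightarrow> G22 | G15 \<Rightarrow> G3 | G16 \<Rightarrow> G4 | G17 \<Rightarrow> G0 | G18 \<Rightarrow> G1 | G19 \<Rightarrow> G2 | G20 \<Rightarrow> G8 | G21 \<Rightarrow> G9 | G22 \<Rightarrow> G5 | G23 \<Rightarrow> G6 | G24 \<Rightarrow> G7) | G14 \<Rightarrow> (case y of G0 \<Rightarrow> G14 | G1 \<Rightarrow> G10 | G2 \<Rightarrow> G11 | G3 \<Rightarrow> G12 | G4 \<Rightarrow> G13 | G5 \<Rightarrow> G19 | G6 \<Rightarrow> G15 | G7 \<Rightarrow> G16 | G8 \<Rightarrow> G17 | G9 \<Rightarrow> G18 | G10 \<Rightarrow> G24 | G11 \<Rightarrow> G20 | G12 \<Rightarrow> G21 | G13 \<Rightarrow> G22 | G14 \<Rightarrow> G23 | G15 \<Rightarrow> G4 | G16 \<Rightarrow> G0 | G17 \<Rightarrow> G1 | G18 \<Rightarrow> G2 | G19 \<Rightarrow> G3 | G20 \<Rightarrow> G9 | G21 \<Rightarrow> G5 | G22 \<Rightarrow> G6 | G23 \<Rightarrow> G7 | G24 \<Rightarrow> G8) | G15 \<Rightarrow> (case y of G0 \<Rightarrow> G15 | G1 \<Rightarrow> G16 | G2 \<Rightarrow> G17 | G3 \<Rightarrow> G18 | G4 \<Rightarrow> G19 | G5 \<Rightarrow> G20 | G6 \<Rightarrow>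 G21 | G7 \<Rightarrow> G22 | G8 \<Rightarrow> G23 | G9 \<Rightarrow> G24 | G10 \<Rightarrow> G0 | G11 \<Rightarrow> G1 | G12 \<Rightarrow> G2 | G13 \<Rightarrow> G3 | G14 \<Rightarrow> G4 | G15 \<Rightarrow> G5 | G16 \<Rightarrow> G6 | G17 \<Rightarrow> G7 | G18 \<Rightarrow> G8 | G19 \<Rightarrow> G9 | G20 \<Rightarrow> G10 | G21 \<Rightarrow> G11 | G22 \<Rightarrow> G12 | G23 \<Rightarrow> G13 | G24 \<Rightarrow> G14) | G16 \<Rightarrow> (case y of G0 \<Rightarrow> G16 | G1 \<Rightarrow> G17 | G2 \<Rightarrow> G18 | G3 \<Rightarrow> G19 | G4 \<Rightarrow> G15 | G5 \<Rightarrow> G21 | G6 \<Rightarrow> G22 | G7 \<Rightarrow> G23 | G8 \<Rightarrow> G24 | G9 \<Rightarrow> G20 | G10 \<Rightarrow> G1 | G11 \<Rightarrow> G2 | G12 \<Rightarrow> G3 | G13 \<Rightarrow> G4 | G14 \<Rightarrow> G0 | G15 \<Rightarrow> G6 | G16 \<Rightarrow> G7 | G17 \<Rightarrow> G8 | G18 \<Rightarrow> G9 | G19 \<Rightarrow> G5 | G20 \<Rightarrow> G11 | G21 \<Rightarrow> G12 | G22 \<Rightarrow> G13 | G23 \<Rightarrow> G14 | G24 \<Rightarrow> G10) | G17 \<Rightarrow> (case y of G0 \<Rightarrow> G17 | G1 \<Rightarrow> G18 | G2 \<Rightarrow> G19 | G3 \<Rightarrow> G15 | G4 \<Rightarrow>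 G16 | G5 \<Rightarrow> G22 | G6 \<Rightarrow> G23 | G7 \<Rightarrow> G24 | G8 \<Rightarrow> G20 | G9 \<Rightarrow> G21 | G10 \<Rightarrow> G2 | G11 \<Rightarrow> G3 | G12 \<Rightarrow> G4 | G13 \<Rightarrow> G0 | G14 \<Rightarrow> G1 | G15 \<Rightarrow> G7 | G16 \<Rightarrow> G8 | G17 \<Rightarrow> G9 | G18 \<Rightarrow> G5 | G19 \<Rightarrow> G6 | G20 \<Rightarrow> G12 | G21 \<Rightarrow> G13 | G22 \<Rightarrow> G14 | G23 \<Rightarrow> G10 | G24 \<Rightarrow> G11) | G18 \<Rightarrow> (case y of G0 \<Rightarrow> G18 | G1 \<Rightarrow> G19 | G2 \<Rightarrow> G15 | G3 \<Rightarrow> G16 | G4 \<Rightarrow> G17 | G5 \<Rightarrow> G23 | G6 \<Rightarrow> G24 | G7 \<Rightarrow> G20 | G8 \<Rightarrow> G21 | G9 \<Rightarrow> G22 | G10 \<Rightarrow> G3 | G11 \<Rightarrow> G4 | G12 \<Rightarrow> G0 | G13 \<Rightarrow> G1 | G14 \<Rightarrow> G2 | G15 \<Rightarrow> G8 | G16 \<Rightarrow> G9 | G17 \<Rightarrow> G5 | G18 \<Rightarrow> G6 | G19 \<Rightarrow> G7 | G20 \<Rightarrow> G13 | G21 \<Rightarrow> G14 | G22 \<Rightarrow> G10 | G23 \<Rightarrow> G11 | G24 \<Rightarrow> G12) | G19 \<Rightarrow> (case y of G0 \<Rightarrow> G19 | G1 \<Rightarrow> G15 | G2 \<Rightarrow>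 G16 | G3 \<Rightarrow> G17 | G4 \<Rightarrow> G18 | G5 \<Rightarrow> G24 | G6 \<Rightarrow> G20 | G7 \<Rightarrow> G21 | G8 \<Rightarrow> G22 | G9 \<Rightarrow> G23 | G10 \<Rightarrow> G4 | G11 \<Rightarrow> G0 | G12 \<Rightarrow> G1 | G13 \<Rightarrow> G2 | G14 \<Rightarrow> G3 | G15 \<Rightarrow> G9 | G16 \<Rightarrow> G5 | G17 \<Rightarrow> G6 | G18 \<Rightarrow> G7 | G19 \<Rightarrow> G8 | G20 \<Rightarrow> G14 | G21 \<Rightarrow> G10 | G22 \<Rightarrow> G11 | G23 \<Rightarrow> G12 | G24 \<Rightarrow> G13) | G20 \<Rightarrow> (case y of G0 \<Rightarrow> G20 | G1 \<Rightarrow> G21 | G2 \<Rightarrow> G22 | G3 \<Rightarrow> G23 | G4 \<Rightarrow> G24 | G5 \<Rightarrow> G0 | G6 \<Rightarrow> G1 | G7 \<Rightarrow> G2 | G8 \<Rightarrow> G3 | G9 \<Rightarrow> G4 | G10 \<Rightarrow> G5 | G11 \<Rightarrow> G6 | G12 \<Rightarrow> G7 | G13 \<Rightarrow> G8 | G14 \<Rightarrow> G9 | G15 \<Rightarrow> G10 | G16 \<Rightarrow> G11 | G17 \<Rightarrow> G12 | G18 \<Rightarrow> G13 | G19 \<Rightarrow> G14 | G20 \<Rightarrow> G15 | G21 \<Rightarrow> G16 | G22 \<Rightarrow> G17 | G23 \<Rightarrow> G18 | G24 \<Rightarrow> G19) | G21 \<Rightarrow> (case y of G0 \<Rightarrow>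 G21 | G1 \<Rightarrow> G22 | G2 \<Rightarrow> G23 | G3 \<Rightarrow> G24 | G4 \<Rightarrow> G20 | G5 \<Rightarrow> G1 | G6 \<Rightarrow> G2 | G7 \<Rightarrow> G3 | G8 \<Rightarrow> G4 | G9 \<Rightarrow> G0 | G10 \<Rightarrow> G6 | G11 \<Rightarrow> G7 | G12 \<Rightarrow> G8 | G13 \<Rightarrow> G9 | G14 \<Rightarrow> G5 | G15 \<Rightarrow> G11 | G16 \<Rightarrow> G12 | G17 \<Rightarrow> G13 | G18 \<Rightarrow> G14 | G19 \<Rightarrow> G10 | G20 \<Rightarrow> G16 | G21 \<Rightarrow> G17 | G22 \<Rightarrow> G18 | G23 \<Rightarrow> G19 | G24 \<Rightarrow> G15) | G22 \<Rightarrow> (case y of G0 \<Rightarrow> G22 | G1 \<Rightarrow> G23 | G2 \<Rightarrow> G24 | G3 \<Rightarrow> G20 | G4 \<Rightarrow> G21 | G5 \<Rightarrow> G2 | G6 \<Rightarrow> G3 | G7 \<Rightarrow> G4 | G8 \<Rightarrow> G0 | G9 \<Rightarrow> G1 | G10 \<Rightarrow> G7 | G11 \<Rightarrow> G8 | G12 \<Rightarrow> G9 | G13 \<Rightarrow> G5 | G14 \<Rightarrow> G6 | G15 \<Rightarrow> G12 | G16 \<Rightarrow> G13 | G17 \<Rightarrow> G14 | G18 \<Rightarrow> G10 | G19 \<Rightarrow> G11 | G20 \<Rightarrow> G17 | G21 \<Rightarrow> G18 | G22 \<Rightarrow> G19 | G23 \<Rightarrow> G15 | G24 \<Rightarrow>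 G16) | G23 \<Rightarrow> (case y of G0 \<Rightarrow> G23 | G1 \<Rightarrow> G24 | G2 \<Rightarrow> G20 | G3 \<Rightarrow> G21 | G4 \<Rightarrow> G22 | G5 \<Rightarrow> G3 | G6 \<Rightarrow> G4 | G7 \<Rightarrow> G0 | G8 \<Rightarrow> G1 | G9 \<Rightarrow> G2 | G10 \<Rightarrow> G8 | G11 \<Rightarrow> G9 | G12 \<Rightarrow> G5 | G13 \<Rightarrow> G6 | G14 \<Rightarrow> G7 | G15 \<Rightarrow> G13 | G16 \<Rightarrow> G14 | G17 \<Rightarrow> G10 | G18 \<Rightarrow> G11 | G19 \<Rightarrow> G12 | G20 \<Rightarrow> G18 | G21 \<Rightarrow> G19 | G22 \<Rightarrow> G15 | G23 \<Rightarrow> G16 | G24 \<Rightarrow> G17) | G24 \<Rightarrow> (case y of G0 \<Rightarrow> G24 | G1 \<Rightarrow> G20 | G2 \<Rightarrow> G21 | G3 \<Rightarrow> G22 | G4 \<Rightarrow> G23 | G5 \<Rightarrow> G4 | G6 \<Rightarrow> G0 | G7 \<Rightarrow> G1 | G8 \<Rightarrow> G2 | G9 \<Rightarrow> G3 | G10 \<Rightarrow> G9 | G11 \<Rightarrow> G5 | G12 \<Rightarrow> G6 | G13 \<Rightarrow> G7 | G14 \<Rightarrow> G8 | G15 \<Rightarrow> G14 | G16 \<Rightarrow> G10 | G17 \<Rightarrow> G11 | G18 \<Rightarrow> G12 | G19 \<Rightarrow> G13 | G20 \<Rightarrow> G19 | G21 \<Rightarrow> G15 | G22 \<Rightarrow>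 G16 | G23 \<Rightarrow> G17 | G24 \<Rightarrow> G18))"

definition gmul :: "g \<Rightarrow> g \<Rightarrow> g" where
  "gmul x y = (case x of G0 \<Rightarrow> (case y of G0 \<Rightarrow> G0 | G1 \<Rightarrow> G0 | G2 \<Rightarrow> G0 | G3 \<Rightarrow> G0 | G4 \<Rightarrow> G0 | G5 \<Rightarrow> G0 | G6 \<Rightarrow> G0 | G7 \<Rightarrow> G0 | G8 \<Rightarrow> G0 | G9 \<Rightarrow> G0 | G10 \<Rightarrow> G0 | G11 \<Rightarrow> G0 | G12 \<Rightarrow> G0 | G13 \<Rightarrow> G0 | G14 \<Rightarrow> G0 | G15 \<Rightarrow> G0 | G16 \<Rightarrow> G0 | G17 \<Rightarrow> G0 | G18 \<Rightarrow> G0 | G19 \<Rightarrow> G0 | G20 \<Rightarrow> G0 | G21 \<Rightarrow> G0 | G22 \<Rightarrow> G0 | G23 \<Rightarrow> G0 | G24 \<Rightarrow> G0) | G1 \<Rightarrow> (case y of G0 \<Rightarrow> G0 | G1 \<Rightarrow> G1 | G2 \<Rightarrow> G2 | G3 \<Rightarrow> G3 | G4 \<Rightarrow> G4 | G5 \<Rightarrow> G5 | G6 \<Rightarrow> G6 | G7 \<Rightarrow> G7 | G8 \<Rightarrow> G8 | G9 \<Rightarrow> G9 | G10 \<Rightarrow> G10 | G11 \<Rightarrow> G11 | G12 \<Rightarrow> G12 | G13 \<Rightarrow> G13 | G14 \<Rightarrow> G14 | G15 \<Rightarrow> G15 | G16 \<Rightarrow> G16 | G17 \<Rightarrow> G17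 | G18 \<Rightarrow> G18 | G19 \<Rightarrow> G19 | G20 \<Rightarrow> G20 | G21 \<Rightarrow> G21 | G22 \<Rightarrow> G22 | G23 \<Rightarrow> G23 | G24 \<Rightarrow> G24) | G2 \<Rightarrow> (case y of G0 \<Rightarrow> G0 | G1 \<Rightarrow> G2 | G2 \<Rightarrow> G4 | G3 \<Rightarrow> G1 | G4 \<Rightarrow> G3 | G5 \<Rightarrow> G10 | G6 \<Rightarrow> G12 | G7 \<Rightarrow> G14 | G8 \<Rightarrow> G11 | G9 \<Rightarrow> G13 | G10 \<Rightarrow> G20 | G11 \<Rightarrow> G22 | G12 \<Rightarrow> G24 | G13 \<Rightarrow> G21 | G14 \<Rightarrow> G23 | G15 \<Rightarrow> G5 | G16 \<Rightarrow> G7 | G17 \<Rightarrow> G9 | G18 \<Rightarrow> G6 | G19 \<Rightarrow> G8 | G20 \<Rightarrow> G15 | G21 \<Rightarrow> G17 | G22 \<Rightarrow> G19 | G23 \<Rightarrow> G16 | G24 \<Rightarrow> G18) | G3 \<Rightarrow> (case y of G0 \<Rightarrow> G0 | G1 \<Rightarrow> G3 | G2 \<Rightarrow> G1 | G3 \<Rightarrow> G4 | G4 \<Rightarrow> G2 | G5 \<Rightarrow> G15 | G6 \<Rightarrow> G18 | G7 \<Rightarrow> G16 | G8 \<Rightarrow> G19 | G9 \<Rightarrow> G17 | G10 \<Rightarrow> G5 | G11 \<Rightarrow> G8 | G12 \<Rightarrow> G6 | G13 \<Rightarrow> G9 | G14 \<Rightarrow> G7 | G15 \<Rightarrow> G20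 | G16 \<Rightarrow> G23 | G17 \<Rightarrow> G21 | G18 \<Rightarrow> G24 | G19 \<Rightarrow> G22 | G20 \<Rightarrow> G10 | G21 \<Rightarrow> G13 | G22 \<Rightarrow> G11 | G23 \<Rightarrow> G14 | G24 \<Rightarrow> G12) | G4 \<Rightarrow> (case y of G0 \<Rightarrow> G0 | G1 \<Rightarrow> G4 | G2 \<Rightarrow> G3 | G3 \<Rightarrow> G2 | G4 \<Rightarrow> G1 | G5 \<Rightarrow> G20 | G6 \<Rightarrow> G24 | G7 \<Rightarrow> G23 | G8 \<Rightarrow> G22 | G9 \<Rightarrow> G21 | G10 \<Rightarrow> G15 | G11 \<Rightarrow> G19 | G12 \<Rightarrow> G18 | G13 \<Rightarrow> G17 | G14 \<Rightarrow> G16 | G15 \<Rightarrow> G10 | G16 \<Rightarrow> G14 | G17 \<Rightarrow> G13 | G18 \<Rightarrow> G12 | G19 \<Rightarrow> G11 | G20 \<Rightarrow> G5 | G21 \<Rightarrow> G9 | G22 \<Rightarrow> G8 | G23 \<Rightarrow> G7 | G24 \<Rightarrow> G6) | G5 \<Rightarrow> (case y of G0 \<Rightarrow> G0 | G1 \<Rightarrow> G5 | G2 \<Rightarrow> G10 | G3 \<Rightarrow> G15 | G4 \<Rightarrow> G20 | G5 \<Rightarrow> G2 | G6 \<Rightarrow> G7 | G7 \<Rightarrow> G12 | G8 \<Rightarrow> G17 | G9 \<Rightarrow> G22 | G10 \<Rightarrow> G4 | G11 \<Rightarrow> G9 | G12 \<Rightarrow> G14 | G13 \<Rightarrow> G19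 | G14 \<Rightarrow> G24 | G15 \<Rightarrow> G1 | G16 \<Rightarrow> G6 | G17 \<Rightarrow> G11 | G18 \<Rightarrow> G16 | G19 \<Rightarrow> G21 | G20 \<Rightarrow> G3 | G21 \<Rightarrow> G8 | G22 \<Rightarrow> G13 | G23 \<Rightarrow> G18 | G24 \<Rightarrow> G23) | G6 \<Rightarrow> (case y of G0 \<Rightarrow> G0 | G1 \<Rightarrow> G6 | G2 \<Rightarrow> G12 | G3 \<Rightarrow> G18 | G4 \<Rightarrow> G24 | G5 \<Rightarrow> G7 | G6 \<Rightarrow> G13 | G7 \<Rightarrow> G19 | G8 \<Rightarrow> G20 | G9 \<Rightarrow> G1 | G10 \<Rightarrow> G14 | G11 \<Rightarrow> G15 | G12 \<Rightarrow> G21 | G13 \<Rightarrow> G2 | G14 \<Rightarrow> G8 | G15 \<Rightarrow> G16 | G16 \<Rightarrow> G22 | G17 \<Rightarrow> G3 | G18 \<Rightarrow> G9 | G19 \<Rightarrow> G10 | G20 \<Rightarrow> G23 | G21 \<Rightarrow> G4 | G22 \<Rightarrow> G5 | G23 \<Rightarrow> G11 | G24 \<Rightarrow> G17) | G7 \<Rightarrow> (case y of G0 \<Rightarrow> G0 | G1 \<Rightarrow> G7 | G2 \<Rightarrow> G14 | G3 \<Rightarrow> G16 | G4 \<Rightarrow> G23 | G5 \<Rightarrow> G12 | G6 \<Rightarrow> G19 | G7 \<Rightarrow> G21 | G8 \<Rightarrow> G3 | G9 \<Rightarrow> G5 | G10 \<Rightarrow> G24 | G11 \<Rightarrow> G1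 | G12 \<Rightarrow> G8 | G13 \<Rightarrow> G10 | G14 \<Rightarrow> G17 | G15 \<Rightarrow> G6 | G16 \<Rightarrow> G13 | G17 \<Rightarrow> G15 | G18 \<Rightarrow> G22 | G19 \<Rightarrow> G4 | G20 \<Rightarrow> G18 | G21 \<Rightarrow> G20 | G22 \<Rightarrow> G2 | G23 \<Rightarrow> G9 | G24 \<Rightarrow> G11) | G8 \<Rightarrow> (case y of G0 \<Rightarrow> G0 | G1 \<Rightarrow> G8 | G2 \<Rightarrow> G11 | G3 \<Rightarrow> G19 | G4 \<Rightarrow> G22 | G5 \<Rightarrow> G17 | G6 \<Rightarrow> G20 | G7 \<Rightarrow> G3 | G8 \<Rightarrow> G6 | G9 \<Rightarrow> G14 | G10 \<Rightarrow> G9 | G11 \<Rightarrow> G12 | G12 \<Rightarrow> G15 | G13 \<Rightarrow> G23 | G14 \<Rightarrow> G1 | G15 \<Rightarrow> G21 | G16 \<Rightarrow> G4 | G17 \<Rightarrow> G7 | G18 \<Rightarrow> G10 | G19 \<Rightarrow> G18 | G20 \<Rightarrow> G13 | G21 \<Rightarrow> G16 | G22 \<Rightarrow> G24 | G23 \<Rightarrow> G2 | G24 \<Rightarrow> G5) | G9 \<Rightarrow> (case y of G0 \<Rightarrow> G0 | G1 \<Rightarrow> G9 | G2 \<Rightarrow> G13 | G3 \<Rightarrow> G17 | G4 \<Rightarrow> G21 | G5 \<Rightarrow> G22 | G6 \<Rightarrow> G1 | G7 \<Rightarrow> G5 | G8 \<Rightarrow> G14 | G9 \<Rightarrow> G18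 | G10 \<Rightarrow> G19 | G11 \<Rightarrow> G23 | G12 \<Rightarrow> G2 | G13 \<Rightarrow> G6 | G14 \<Rightarrow> G10 | G15 \<Rightarrow> G11 | G16 \<Rightarrow> G15 | G17 \<Rightarrow> G24 | G18 \<Rightarrow> G3 | G19 \<Rightarrow> G7 | G20 \<Rightarrow> G8 | G21 \<Rightarrow> G12 | G22 \<Rightarrow> G16 | G23 \<Rightarrow> G20 | G24 \<Rightarrow> G4) | G10 \<Rightarrow> (case y of G0 \<Rightarrow> G0 | G1 \<Rightarrow> G10 | G2 \<Rightarrow> G20 | G3 \<Rightarrow> G5 | G4 \<Rightarrow> G15 | G5 \<Rightarrow> G4 | G6 \<Rightarrow> G14 | G7 \<Rightarrow> G24 | G8 \<Rightarrow> G9 | G9 \<Rightarrow> G19 | G10 \<Rightarrow> G3 | G11 \<Rightarrow> G13 | G12 \<Rightarrow> G23 | G13 \<Rightarrow> G8 | G14 \<Rightarrow> G18 | G15 \<Rightarrow> G2 | G16 \<Rightarrow> G12 | G17 \<Rightarrow> G22 | G18 \<Rightarrow> G7 | G19 \<Rightarrow> G17 | G20 \<Rightarrow> G1 | G21 \<Rightarrow> G11 | G22 \<Rightarrow> G21 | G23 \<Rightarrow> G6 | G24 \<Rightarrow> G16) | G11 \<Rightarrow> (case y of G0 \<Rightarrow> G0 | G1 \<Rightarrow> G11 | G2 \<Rightarrow> G22 | G3 \<Rightarrow> G8 | G4 \<Rightarrow> G19 | G5 \<Rightarrow> G9 | G6 \<Rightarrow> G15 | G7 \<Rightarrow> G1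 | G8 \<Rightarrow> G12 | G9 \<Rightarrow> G23 | G10 \<Rightarrow> G13 | G11 \<Rightarrow> G24 | G12 \<Rightarrow> G5 | G13 \<Rightarrow> G16 | G14 \<Rightarrow> G2 | G15 \<Rightarrow> G17 | G16 \<Rightarrow> G3 | G17 \<Rightarrow> G14 | G18 \<Rightarrow> G20 | G19 \<Rightarrow> G6 | G20 \<Rightarrow> G21 | G21 \<Rightarrow> G7 | G22 \<Rightarrow> G18 | G23 \<Rightarrow> G4 | G24 \<Rightarrow> G10) | G12 \<Rightarrow> (case y of G0 \<Rightarrow> G0 | G1 \<Rightarrow> G12 | G2 \<Rightarrow> G24 | G3 \<Rightarrow> G6 | G4 \<Rightarrow> G18 | G5 \<Rightarrow> G14 | G6 \<Rightarrow> G21 | G7 \<Rightarrow> G8 | G8 \<Rightarrow> G15 | G9 \<Rightarrow> G2 | G10 \<Rightarrow> G23 | G11 \<Rightarrow> G5 | G12 \<Rightarrow> G17 | G13 \<Rightarrow> G4 | G14 \<Rightarrow> G11 | G15 \<Rightarrow> G7 | G16 \<Rightarrow> G19 | G17 \<Rightarrow> G1 | G18 \<Rightarrow> G13 | G19 \<Rightarrow> G20 | G20 \<Rightarrow> G16 | G21 \<Rightarrow> G3 | G22 \<Rightarrow> G10 | G23 \<Rightarrow> G22 | G24 \<Rightarrow> G9) | G13 \<Rightarrow> (case y of G0 \<Rightarrow> G0 | G1 \<Rightarrow> G13 | G2 \<Rightarrow> G21 | G3 \<Rightarrow> G9 | G4 \<Rightarrow> G17 | G5 \<Rightarrow> G19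 | G6 \<Rightarrow> G2 | G7 \<Rightarrow> G10 | G8 \<Rightarrow> G23 | G9 \<Rightarrow> G6 | G10 \<Rightarrow> G8 | G11 \<Rightarrow> G16 | G12 \<Rightarrow> G4 | G13 \<Rightarrow> G12 | G14 \<Rightarrow> G20 | G15 \<Rightarrow> G22 | G16 \<Rightarrow> G5 | G17 \<Rightarrow> G18 | G18 \<Rightarrow> G1 | G19 \<Rightarrow> G14 | G20 \<Rightarrow> G11 | G21 \<Rightarrow> G24 | G22 \<Rightarrow> G7 | G23 \<Rightarrow> G15 | G24 \<Rightarrow> G3) | G14 \<Rightarrow> (case y of G0 \<Rightarrow> G0 | G1 \<Rightarrow> G14 | G2 \<Rightarrow> G23 | G3 \<Rightarrow> G7 | G4 \<Rightarrow> G16 | G5 \<Rightarrow> G24 | G6 \<Rightarrow> G8 | G7 \<Rightarrow> G17 | G8 \<Rightarrow> G1 | G9 \<Rightarrow> G10 | G10 \<Rightarrow> G18 | G11 \<Rightarrow> G2 | G12 \<Rightarrow> G11 | G13 \<Rightarrow> G20 | G14 \<Rightarrow> G9 | G15 \<Rightarrow> G12 | G16 \<Rightarrow> G21 | G17 \<Rightarrow> G5 | G18 \<Rightarrow> G19 | G19 \<Rightarrow> G3 | G20 \<Rightarrow> G6 | G21 \<Rightarrow> G15 | G22 \<Rightarrow> G4 | G23 \<Rightarrow> G13 | G24 \<Rightarrow> G22) | G15 \<Rightarrow> (case y of G0 \<Rightarrow> G0 | G1 \<Rightarrow> G15 | G2 \<Rightarrow> G5 | G3 \<Rightarrow> G20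 | G4 \<Rightarrow> G10 | G5 \<Rightarrow> G1 | G6 \<Rightarrow> G16 | G7 \<Rightarrow> G6 | G8 \<Rightarrow> G21 | G9 \<Rightarrow> G11 | G10 \<Rightarrow> G2 | G11 \<Rightarrow> G17 | G12 \<Rightarrow> G7 | G13 \<Rightarrow> G22 | G14 \<Rightarrow> G12 | G15 \<Rightarrow> G3 | G16 \<Rightarrow> G18 | G17 \<Rightarrow> G8 | G18 \<Rightarrow> G23 | G19 \<Rightarrow> G13 | G20 \<Rightarrow> G4 | G21 \<Rightarrow> G19 | G22 \<Rightarrow> G9 | G23 \<Rightarrow> G24 | G24 \<Rightarrow> G14) | G16 \<Rightarrow> (case y of G0 \<Rightarrow> G0 | G1 \<Rightarrow> G16 | G2 \<Rightarrow> G7 | G3 \<Rightarrow> G23 | G4 \<Rightarrow> G14 | G5 \<Rightarrow> G6 | G6 \<Rightarrow> G22 | G7 \<Rightarrow> G13 | G8 \<Rightarrow> G4 | G9 \<Rightarrow> G15 | G10 \<Rightarrow> G12 | G11 \<Rightarrow> G3 | G12 \<Rightarrow> G19 | G13 \<Rightarrow> G5 | G14 \<Rightarrow> G21 | G15 \<Rightarrow> G18 | G16 \<Rightarrow> G9 | G17 \<Rightarrow> G20 | G18 \<Rightarrow> G11 | G19 \<Rightarrow> G2 | G20 \<Rightarrow> G24 | G21 \<Rightarrow> G10 | G22 \<Rightarrow> G1 | G23 \<Rightarrow> G17 | G24 \<Rightarrow> G8) | G17 \<Rightarrow> (case y of G0 \<Rightarrow> G0 | G1 \<Rightarrow> G17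 | G2 \<Rightarrow> G9 | G3 \<Rightarrow> G21 | G4 \<Rightarrow> G13 | G5 \<Rightarrow> G11 | G6 \<Rightarrow> G3 | G7 \<Rightarrow> G15 | G8 \<Rightarrow> G7 | G9 \<Rightarrow> G24 | G10 \<Rightarrow> G22 | G11 \<Rightarrow> G14 | G12 \<Rightarrow> G1 | G13 \<Rightarrow> G18 | G14 \<Rightarrow> G5 | G15 \<Rightarrow> G8 | G16 \<Rightarrow> G20 | G17 \<Rightarrow> G12 | G18 \<Rightarrow> G4 | G19 \<Rightarrow> G16 | G20 \<Rightarrow> G19 | G21 \<Rightarrow> G6 | G22 \<Rightarrow> G23 | G23 \<Rightarrow> G10 | G24 \<Rightarrow> G2) | G18 \<Rightarrow> (case y of G0 \<Rightarrow> G0 | G1 \<Rightarrow> G18 | G2 \<Rightarrow> G6 | G3 \<Rightarrow> G24 | G4 \<Rightarrow> G12 | G5 \<Rightarrow> G16 | G6 \<Rightarrow> G9 | G7 \<Rightarrow> G22 | G8 \<Rightarrow> G10 | G9 \<Rightarrow> G3 | G10 \<Rightarrow> G7 | G11 \<Rightarrow> G20 | G12 \<Rightarrow> G13 | G13 \<Rightarrow> G1 | G14 \<Rightarrow> G19 | G15 \<Rightarrow> G23 | G16 \<Rightarrow> G11 | G17 \<Rightarrow> G4 | G18 \<Rightarrow> G17 | G19 \<Rightarrow> G5 | G20 \<Rightarrow> G14 | G21 \<Rightarrow> G2 | G22 \<Rightarrow> G15 | G23 \<Rightarrow> G8 | G24 \<Rightarrow> G21) | G19 \<Rightarrow> (case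 y of G0 \<Rightarrow> G0 | G1 \<Rightarrow> G19 | G2 \<Rightarrow> G8 | G3 \<Rightarrow> G22 | G4 \<Rightarrow> G11 | G5 \<Rightarrow> G21 | G6 \<Rightarrow> G10 | G7 \<Rightarrow> G4 | G8 \<Rightarrow> G18 | G9 \<Rightarrow> G7 | G10 \<Rightarrow> G17 | G11 \<Rightarrow> G6 | G12 \<Rightarrow> G20 | G13 \<Rightarrow> G14 | G14 \<Rightarrow> G3 | G15 \<Rightarrow> G13 | G16 \<Rightarrow> G2 | G17 \<Rightarrow> G16 | G18 \<Rightarrow> G5 | G19 \<Rightarrow> G24 | G20 \<Rightarrow> G9 | G21 \<Rightarrow> G23 | G22 \<Rightarrow> G12 | G23 \<Rightarrow> G1 | G24 \<Rightarrow> G15) | G20 \<Rightarrow> (case y of G0 \<Rightarrow> G0 | G1 \<Rightarrow> G20 | G2 \<Rightarrow> G15 | G3 \<Rightarrow> G10 | G4 \<Rightarrow> G5 | G5 \<Rightarrow> G3 | G6 \<Rightarrow> G23 | G7 \<Rightarrow> G18 | G8 \<Rightarrow> G13 | G9 \<Rightarrow> G8 | G10 \<Rightarrow> G1 | G11 \<Rightarrow> G21 | G12 \<Rightarrow> G16 | G13 \<Rightarrow> G11 | G14 \<Rightarrow> G6 | G15 \<Rightarrow> G4 | G16 \<Rightarrow> G24 | G17 \<Rightarrow> G19 | G18 \<Rightarrow> G14 | G19 \<Rightarrow> G9 | G20 \<Rightarrow> G2 | G21 \<Rightarrow> G22 | G22 \<Rightarrow> G17 | G23 \<Rightarrow> G12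 | G24 \<Rightarrow> G7) | G21 \<Rightarrow> (case y of G0 \<Rightarrow> G0 | G1 \<Rightarrow> G21 | G2 \<Rightarrow> G17 | G3 \<Rightarrow> G13 | G4 \<Rightarrow> G9 | G5 \<Rightarrow> G8 | G6 \<Rightarrow> G4 | G7 \<Rightarrow> G20 | G8 \<Rightarrow> G16 | G9 \<Rightarrow> G12 | G10 \<Rightarrow> G11 | G11 \<Rightarrow> G7 | G12 \<Rightarrow> G3 | G13 \<Rightarrow> G24 | G14 \<Rightarrow> G15 | G15 \<Rightarrow> G19 | G16 \<Rightarrow> G10 | G17 \<Rightarrow> G6 | G18 \<Rightarrow> G2 | G19 \<Rightarrow> G23 | G20 \<Rightarrow> G22 | G21 \<Rightarrow> G18 | G22 \<Rightarrow> G14 | G23 \<Rightarrow> G5 | G24 \<Rightarrow> G1) | G22 \<Rightarrow> (case y of G0 \<Rightarrow> G0 | G1 \<Rightarrow> G22 | G2 \<Rightarrow> G19 | G3 \<Rightarrow> G11 | G4 \<Rightarrow> G8 | G5 \<Rightarrow> G13 | G6 \<Rightarrow> G5 | G7 \<Rightarrow> G2 | G8 \<Rightarrow> G24 | G9 \<Rightarrow> G16 | G10 \<Rightarrow> G21 | G11 \<Rightarrow> G18 | G12 \<Rightarrow> G10 | G13 \<Rightarrow> G7 | G14 \<Rightarrow> G4 | G15 \<Rightarrow> G9 | G16 \<Rightarrow> G1 | G17 \<Rightarrow> G23 | G18 \<Rightarrow> G15 | G19 \<Rightarrow> G12 | G20 \<Rightarrow> G17 | G21 \<Rightarrow> G14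 | G22 \<Rightarrow> G6 | G23 \<Rightarrow> G3 | G24 \<Rightarrow> G20) | G23 \<Rightarrow> (case y of G0 \<Rightarrow> G0 | G1 \<Rightarrow> G23 | G2 \<Rightarrow> G16 | G3 \<Rightarrow> G14 | G4 \<Rightarrow> G7 | G5 \<Rightarrow> G18 | G6 \<Rightarrow> G11 | G7 \<Rightarrow> G9 | G8 \<Rightarrow> G2 | G9 \<Rightarrow> G20 | G10 \<Rightarrow> G6 | G11 \<Rightarrow> G4 | G12 \<Rightarrow> G22 | G13 \<Rightarrow> G15 | G14 \<Rightarrow> G13 | G15 \<Rightarrow> G24 | G16 \<Rightarrow> G17 | G17 \<Rightarrow> G10 | G18 \<Rightarrow> G8 | G19 \<Rightarrow> G1 | G20 \<Rightarrow> G12 | G21 \<Rightarrow> G5 | G22 \<Rightarrow> G3 | G23 \<Rightarrow> G21 | G24 \<Rightarrow> G19) | G24 \<Rightarrow> (case y of G0 \<Rightarrow> G0 | G1 \<Rightarrow> G24 | G2 \<Rightarrow> G18 | G3 \<Rightarrow> G12 | G4 \<Rightarrow> G6 | G5 \<Rightarrow> G23 | G6 \<Rightarrow> G17 | G7 \<Rightarrow> G11 | G8 \<Rightarrow> G5 | G9 \<Rightarrow> G4 | G10 \<Rightarrow> G16 | G11 \<Rightarrow> G10 | G12 \<Rightarrow> G9 | G13 \<Rightarrow> G3 | G14 \<Rightarrow> G22 | G15 \<Rightarrow> G14 | G16 \<Rightarrow> G8 | G17 \<Rightarrow> G2 | G18 \<Rightarrow> G21 | G19 \<Rightarrow> G15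 | G20 \<Rightarrow> G7 | G21 \<Rightarrow> G1 | G22 \<Rightarrow> G20 | G23 \<Rightarrow> G19 | G24 \<Rightarrow> G13))"

lemma gadd_simps[simp]:
  "gadd G0 G0 = G0"
  "gadd G0 G1 = G1"
  "gadd G0 G2 = G2"
  "gadd G0 G3 = G3"
  "gadd G0 G4 = G4"
  "gadd G0 G5 = G5"
  "gadd G0 G6 = G6"
  "gadd G0 G7 = G7"
  "gadd G0 G8 = G8"
  "gadd G0 G9 = G9"
  "gadd G0 G10 = G10"
  "gadd G0 G11 = G11"
  "gadd G0 G12 = G12"
  "gadd G0 G13 = G13"
  "gadd G0 G14 = G14"
  "gadd G0 G15 = G15"
  "gadd G0 G16 = G16"
  "gadd G0 G17 = G17"
  "gadd G0 G18 = G18"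
  "gadd G0 G19 = G19"
  "gadd G0 G20 = G20"
  "gadd G0 G21 = G21"
  "gadd G0 G22 = G22"
  "gadd G0 G23 = G23"
  "gadd G0 G24 = G24"
  "gadd G1 G0 = G1"
  "gadd G1 G1 = G2"
  "gadd G1 G2 = G3"
  "gadd G1 G3 = G4"
  "gadd G1 G4 = G0"
  "gadd G1 G5 = G6"
  "gadd G1 G6 = G7"
  "gadd G1 G7 = G8"
  "gadd G1 G8 = G9"
  "gadd G1 G9 = G5"
  "gadd G1 G10 = G11"
  "gadd G1 G11 = G12"
  "gadd G1 G12 = G13"
  "gadd G1 G13 = G14"
  "gadd G1 G14 = G10"
  "gadd G1 G15 = G16"
  "gadd G1 G16 = G17"
  "gadd G1 G17 = G18"
  "gadd G1 G18 = G19"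
  "gadd G1 G19 = G15"
  "gadd G1 G20 = G21"
  "gadd G1 G21 = G22"
  "gadd G1 G22 = G23"
  "gadd G1 G23 = G24"
  "gadd G1 G24 = G20"
  "gadd G2 G0 = G2"
  "gadd G2 G1 = G3"
  "gadd G2 G2 = G4"
  "gadd G2 G3 = G0"
  "gadd G2 G4 = G1"
  "gadd G2 G5 = G7"
  "gadd G2 G6 = G8"
  "gadd G2 G7 = G9"
  "gadd G2 G8 = G5"
  "gadd G2 G9 = G6"
  "gadd G2 G10 = G12"
  "gadd G2 G11 = G13"
  "gadd G2 G12 = G14"
  "gadd G2 G13 = G10"
  "gadd G2 G14 = G11"
  "gadd G2 G15 = G17"
  "gadd G2 G16 = G18"
  "gadd G2 G17 = G19"
  "gadd G2 G18 = G15"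
  "gadd G2 G19 = G16"
  "gadd G2 G20 = G22"
  "gadd G2 G21 = G23"
  "gadd G2 G22 = G24"
  "gadd G2 G23 = G20"
  "gadd G2 G24 = G21"
  "gadd G3 G0 = G3"
  "gadd G3 G1 = G4"
  "gadd G3 G2 = G0"
  "gadd G3 G3 = G1"
  "gadd G3 G4 = G2"
  "gadd G3 G5 = G8"
  "gadd G3 G6 = G9"
  "gadd G3 G7 = G5"
  "gadd G3 G8 = G6"
  "gadd G3 G9 = G7"
  "gadd G3 G10 = G13"
  "gadd G3 G11 = G14"
  "gadd G3 G12 = G10"
  "gadd G3 G13 = G11"
  "gadd G3 G14 = G12"
  "gadd G3 G15 = G18"
  "gadd G3 G16 = G19"
  "gadd G3 G17 = G15"
  "gadd G3 G18 = G16"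
  "gadd G3 G19 = G17"
  "gadd G3 G20 = G23"
  "gadd G3 G21 = G24"
  "gadd G3 G22 = G20"
  "gadd G3 G23 = G21"
  "gadd G3 G24 = G22"
  "gadd G4 G0 = G4"
  "gadd G4 G1 = G0"
  "gadd G4 G2 = G1"
  "gadd G4 G3 = G2"
  "gadd G4 G4 = G3"
  "gadd G4 G5 = G9"
  "gadd G4 G6 = G5"
  "gadd G4 G7 = G6"
  "gadd G4 G8 = G7"
  "gadd G4 G9 = G8"
  "gadd G4 G10 = G14"
  "gadd G4 G11 = G10"
  "gadd G4 G12 = G11"
  "gadd G4 G13 = G12"
  "gadd G4 G14 = G13"
  "gadd G4 G15 = G19"
  "gadd G4 G16 = G15"
  "gadd G4 G17 = G16"
  "gadd G4 G18 = G17"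
  "gadd G4 G19 = G18"
  "gadd G4 G20 = G24"
  "gadd G4 G21 = G20"
  "gadd G4 G22 = G21"
  "gadd G4 G23 = G22"
  "gadd G4 G24 = G23"
  "gadd G5 G0 = G5"
  "gadd G5 G1 = G6"
  "gadd G5 G2 = G7"
  "gadd G5 G3 = G8"
  "gadd G5 G4 = G9"
  "gadd G5 G5 = G10"
  "gadd G5 G6 = G11"
  "gadd G5 G7 = G12"
  "gadd G5 G8 = G13"
  "gadd G5 G9 = G14"
  "gadd G5 G10 = G15"
  "gadd G5 G11 = G16"
  "gadd G5 G12 = G17"
  "gadd G5 G13 = G18"
  "gadd G5 G14 = G19"
  "gadd G5 G15 = G20"
  "gadd G5 G16 = G21"
  "gadd G5 G17 = G22"
  "gadd G5 G18 = G23"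
  "gadd G5 G19 = G24"
  "gadd G5 G20 = G0"
  "gadd G5 G21 = G1"
  "gadd G5 G22 = G2"
  "gadd G5 G23 = G3"
  "gadd G5 G24 = G4"
  "gadd G6 G0 = G6"
  "gadd G6 G1 = G7"
  "gadd G6 G2 = G8"
  "gadd G6 G3 = G9"
  "gadd G6 G4 = G5"
  "gadd G6 G5 = G11"
  "gadd G6 G6 = G12"
  "gadd G6 G7 = G13"
  "gadd G6 G8 = G14"
  "gadd G6 G9 = G10"
  "gadd G6 G10 = G16"
  "gadd G6 G11 = G17"
  "gadd G6 G12 = G18"
  "gadd G6 G13 = G19"
  "gadd G6 G14 = G15"
  "gadd G6 G15 = G21"
  "gadd G6 G16 = G22"
  "gadd G6 G17 = G23"
  "gadd G6 G18 = G24"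
  "gadd G6 G19 = G20"
  "gadd G6 G20 = G1"
  "gadd G6 G21 = G2"
  "gadd G6 G22 = G3"
  "gadd G6 G23 = G4"
  "gadd G6 G24 = G0"
  "gadd G7 G0 = G7"
  "gadd G7 G1 = G8"
  "gadd G7 G2 = G9"
  "gadd G7 G3 = G5"
  "gadd G7 G4 = G6"
  "gadd G7 G5 = G12"
  "gadd G7 G6 = G13"
  "gadd G7 G7 = G14"
  "gadd G7 G8 = G10"
  "gadd G7 G9 = G11"
  "gadd G7 G10 = G17"
  "gadd G7 G11 = G18"
  "gadd G7 G12 = G19"
  "gadd G7 G13 = G15"
  "gadd G7 G14 = G16"
  "gadd G7 G15 = G22"
  "gadd G7 G16 = G23"
  "gadd G7 G17 = G24"
  "gadd G7 G18 = G20"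
  "gadd G7 G19 = G21"
  "gadd G7 G20 = G2"
  "gadd G7 G21 = G3"
  "gadd G7 G22 = G4"
  "gadd G7 G23 = G0"
  "gadd G7 G24 = G1"
  "gadd G8 G0 = G8"
  "gadd G8 G1 = G9"
  "gadd G8 G2 = G5"
  "gadd G8 G3 = G6"
  "gadd G8 G4 = G7"
  "gadd G8 G5 = G13"
  "gadd G8 G6 = G14"
  "gadd G8 G7 = G10"
  "gadd G8 G8 = G11"
  "gadd G8 G9 = G12"
  "gadd G8 G10 = G18"
  "gadd G8 G11 = G19"
  "gadd G8 G12 = G15"
  "gadd G8 G13 = G16"
  "gadd G8 G14 = G17"
  "gadd G8 G15 = G23"
  "gadd G8 G16 = G24"
  "gadd G8 G17 = G20"
  "gadd G8 G18 = G21"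
  "gadd G8 G19 = G22"
  "gadd G8 G20 = G3"
  "gadd G8 G21 = G4"
  "gadd G8 G22 = G0"
  "gadd G8 G23 = G1"
  "gadd G8 G24 = G2"
  "gadd G9 G0 = G9"
  "gadd G9 G1 = G5"
  "gadd G9 G2 = G6"
  "gadd G9 G3 = G7"
  "gadd G9 G4 = G8"
  "gadd G9 G5 = G14"
  "gadd G9 G6 = G10"
  "gadd G9 G7 = G11"
  "gadd G9 G8 = G12"
  "gadd G9 G9 = G13"
  "gadd G9 G10 = G19"
  "gadd G9 G11 = G15"
  "gadd G9 G12 = G16"
  "gadd G9 G13 = G17"
  "gadd G9 G14 = G18"
  "gadd G9 G15 = G24"
  "gadd G9 G16 = G20"
  "gadd G9 G17 = G21"
  "gadd G9 G18 = G22"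
  "gadd G9 G19 = G23"
  "gadd G9 G20 = G4"
  "gadd G9 G21 = G0"
  "gadd G9 G22 = G1"
  "gadd G9 G23 = G2"
  "gadd G9 G24 = G3"
  "gadd G10 G0 = G10"
  "gadd G10 G1 = G11"
  "gadd G10 G2 = G12"
  "gadd G10 G3 = G13"
  "gadd G10 G4 = G14"
  "gadd G10 G5 = G15"
  "gadd G10 G6 = G16"
  "gadd G10 G7 = G17"
  "gadd G10 G8 = G18"
  "gadd G10 G9 = G19"
  "gadd G10 G10 = G20"
  "gadd G10 G11 = G21"
  "gadd G10 G12 = G22"
  "gadd G10 G13 = G23"
  "gadd G10 G14 = G24"
  "gadd G10 G15 = G0"
  "gadd G10 G16 = G1"
  "gadd G10 G17 = G2"
  "gadd G10 G18 = G3"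
  "gadd G10 G19 = G4"
  "gadd G10 G20 = G5"
  "gadd G10 G21 = G6"
  "gadd G10 G22 = G7"
  "gadd G10 G23 = G8"
  "gadd G10 G24 = G9"
  "gadd G11 G0 = G11"
  "gadd G11 G1 = G12"
  "gadd G11 G2 = G13"
  "gadd G11 G3 = G14"
  "gadd G11 G4 = G10"
  "gadd G11 G5 = G16"
  "gadd G11 G6 = G17"
  "gadd G11 G7 = G18"
  "gadd G11 G8 = G19"
  "gadd G11 G9 = G15"
  "gadd G11 G10 = G21"
  "gadd G11 G11 = G22"
  "gadd G11 G12 = G23"
  "gadd G11 G13 = G24"
  "gadd G11 G14 = G20"
  "gadd G11 G15 = G1"
  "gadd G11 G16 = G2"
  "gadd G11 G17 = G3"
  "gadd G11 G18 = G4"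
  "gadd G11 G19 = G0"
  "gadd G11 G20 = G6"
  "gadd G11 G21 = G7"
  "gadd G11 G22 = G8"
  "gadd G11 G23 = G9"
  "gadd G11 G24 = G5"
  "gadd G12 G0 = G12"
  "gadd G12 G1 = G13"
  "gadd G12 G2 = G14"
  "gadd G12 G3 = G10"
  "gadd G12 G4 = G11"
  "gadd G12 G5 = G17"
  "gadd G12 G6 = G18"
  "gadd G12 G7 = G19"
  "gadd G12 G8 = G15"
  "gadd G12 G9 = G16"
  "gadd G12 G10 = G22"
  "gadd G12 G11 = G23"
  "gadd G12 G12 = G24"
  "gadd G12 G13 = G20"
  "gadd G12 G14 = G21"
  "gadd G12 G15 = G2"
  "gadd G12 G16 = G3"
  "gadd G12 G17 = G4"
  "gadd G12 G18 = G0"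
  "gadd G12 G19 = G1"
  "gadd G12 G20 = G7"
  "gadd G12 G21 = G8"
  "gadd G12 G22 = G9"
  "gadd G12 G23 = G5"
  "gadd G12 G24 = G6"
  "gadd G13 G0 = G13"
  "gadd G13 G1 = G14"
  "gadd G13 G2 = G10"
  "gadd G13 G3 = G11"
  "gadd G13 G4 = G12"
  "gadd G13 G5 = G18"
  "gadd G13 G6 = G19"
  "gadd G13 G7 = G15"
  "gadd G13 G8 = G16"
  "gadd G13 G9 = G17"
  "gadd G13 G10 = G23"
  "gadd G13 G11 = G24"
  "gadd G13 G12 = G20"
  "gadd G13 G13 = G21"
  "gadd G13 G14 = G22"
  "gadd G13 G15 = G3"
  "gadd G13 G16 = G4"
  "gadd G13 G17 = G0"
  "gadd G13 G18 = G1"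
  "gadd G13 G19 = G2"
  "gadd G13 G20 = G8"
  "gadd G13 G21 = G9"
  "gadd G13 G22 = G5"
  "gadd G13 G23 = G6"
  "gadd G13 G24 = G7"
  "gadd G14 G0 = G14"
  "gadd G14 G1 = G10"
  "gadd G14 G2 = G11"
  "gadd G14 G3 = G12"
  "gadd G14 G4 = G13"
  "gadd G14 G5 = G19"
  "gadd G14 G6 = G15"
  "gadd G14 G7 = G16"
  "gadd G14 G8 = G17"
  "gadd G14 G9 = G18"
  "gadd G14 G10 = G24"
  "gadd G14 G11 = G20"
  "gadd G14 G12 = G21"
  "gadd G14 G13 = G22"
  "gadd G14 G14 = G23"
  "gadd G14 G15 = G4"
  "gadd G14 G16 = G0"
  "gadd G14 G17 = G1"
  "gadd G14 G18 = G2"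
  "gadd G14 G19 = G3"
  "gadd G14 G20 = G9"
  "gadd G14 G21 = G5"
  "gadd G14 G22 = G6"
  "gadd G14 G23 = G7"
  "gadd G14 G24 = G8"
  "gadd G15 G0 = G15"
  "gadd G15 G1 = G16"
  "gadd G15 G2 = G17"
  "gadd G15 G3 = G18"
  "gadd G15 G4 = G19"
  "gadd G15 G5 = G20"
  "gadd G15 G6 = G21"
  "gadd G15 G7 = G22"
  "gadd G15 G8 = G23"
  "gadd G15 G9 = G24"
  "gadd G15 G10 = G0"
  "gadd G15 G11 = G1"
  "gadd G15 G12 = G2"
  "gadd G15 G13 = G3"
  "gadd G15 G14 = G4"
  "gadd G15 G15 = G5"
  "gadd G15 G16 = G6"
  "gadd G15 G17 = G7"
  "gadd G15 G18 = G8"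
  "gadd G15 G19 = G9"
  "gadd G15 G20 = G10"
  "gadd G15 G21 = G11"
  "gadd G15 G22 = G12"
  "gadd G15 G23 = G13"
  "gadd G15 G24 = G14"
  "gadd G16 G0 = G16"
  "gadd G16 G1 = G17"
  "gadd G16 G2 = G18"
  "gadd G16 G3 = G19"
  "gadd G16 G4 = G15"
  "gadd G16 G5 = G21"
  "gadd G16 G6 = G22"
  "gadd G16 G7 = G23"
  "gadd G16 G8 = G24"
  "gadd G16 G9 = G20"
  "gadd G16 G10 = G1"
  "gadd G16 G11 = G2"
  "gadd G16 G12 = G3"
  "gadd G16 G13 = G4"
  "gadd G16 G14 = G0"
  "gadd G16 G15 = G6"
  "gadd G16 G16 = G7"
  "gadd G16 G17 = G8"
  "gadd G16 G18 = G9"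
  "gadd G16 G19 = G5"
  "gadd G16 G20 = G11"
  "gadd G16 G21 = G12"
  "gadd G16 G22 = G13"
  "gadd G16 G23 = G14"
  "gadd G16 G24 = G10"
  "gadd G17 G0 = G17"
  "gadd G17 G1 = G18"
  "gadd G17 G2 = G19"
  "gadd G17 G3 = G15"
  "gadd G17 G4 = G16"
  "gadd G17 G5 = G22"
  "gadd G17 G6 = G23"
  "gadd G17 G7 = G24"
  "gadd G17 G8 = G20"
  "gadd G17 G9 = G21"
  "gadd G17 G10 = G2"
  "gadd G17 G11 = G3"
  "gadd G17 G12 = G4"
  "gadd G17 G13 = G0"
  "gadd G17 G14 = G1"
  "gadd G17 G15 = G7"
  "gadd G17 G16 = G8"
  "gadd G17 G17 = G9"
  "gadd G17 G18 = G5"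
  "gadd G17 G19 = G6"
  "gadd G17 G20 = G12"
  "gadd G17 G21 = G13"
  "gadd G17 G22 = G14"
  "gadd G17 G23 = G10"
  "gadd G17 G24 = G11"
  "gadd G18 G0 = G18"
  "gadd G18 G1 = G19"
  "gadd G18 G2 = G15"
  "gadd G18 G3 = G16"
  "gadd G18 G4 = G17"
  "gadd G18 G5 = G23"
  "gadd G18 G6 = G24"
  "gadd G18 G7 = G20"
  "gadd G18 G8 = G21"
  "gadd G18 G9 = G22"
  "gadd G18 G10 = G3"
  "gadd G18 G11 = G4"
  "gadd G18 G12 = G0"
  "gadd G18 G13 = G1"
  "gadd G18 G14 = G2"
  "gadd G18 G15 = G8"
  "gadd G18 G16 = G9"
  "gadd G18 G17 = G5"
  "gadd G18 G18 = G6"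
  "gadd G18 G19 = G7"
  "gadd G18 G20 = G13"
  "gadd G18 G21 = G14"
  "gadd G18 G22 = G10"
  "gadd G18 G23 = G11"
  "gadd G18 G24 = G12"
  "gadd G19 G0 = G19"
  "gadd G19 G1 = G15"
  "gadd G19 G2 = G16"
  "gadd G19 G3 = G17"
  "gadd G19 G4 = G18"
  "gadd G19 G5 = G24"
  "gadd G19 G6 = G20"
  "gadd G19 G7 = G21"
  "gadd G19 G8 = G22"
  "gadd G19 G9 = G23"
  "gadd G19 G10 = G4"
  "gadd G19 G11 = G0"
  "gadd G19 G12 = G1"
  "gadd G19 G13 = G2"
  "gadd G19 G14 = G3"
  "gadd G19 G15 = G9"
  "gadd G19 G16 = G5"
  "gadd G19 G17 = G6"
  "gadd G19 G18 = G7"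
  "gadd G19 G19 = G8"
  "gadd G19 G20 = G14"
  "gadd G19 G21 = G10"
  "gadd G19 G22 = G11"
  "gadd G19 G23 = G12"
  "gadd G19 G24 = G13"
  "gadd G20 G0 = G20"
  "gadd G20 G1 = G21"
  "gadd G20 G2 = G22"
  "gadd G20 G3 = G23"
  "gadd G20 G4 = G24"
  "gadd G20 G5 = G0"
  "gadd G20 G6 = G1"
  "gadd G20 G7 = G2"
  "gadd G20 G8 = G3"
  "gadd G20 G9 = G4"
  "gadd G20 G10 = G5"
  "gadd G20 G11 = G6"
  "gadd G20 G12 = G7"
  "gadd G20 G13 = G8"
  "gadd G20 G14 = G9"
  "gadd G20 G15 = G10"
  "gadd G20 G16 = G11"
  "gadd G20 G17 = G12"
  "gadd G20 G18 = G13"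
  "gadd G20 G19 = G14"
  "gadd G20 G20 = G15"
  "gadd G20 G21 = G16"
  "gadd G20 G22 = G17"
  "gadd G20 G23 = G18"
  "gadd G20 G24 = G19"
  "gadd G21 G0 = G21"
  "gadd G21 G1 = G22"
  "gadd G21 G2 = G23"
  "gadd G21 G3 = G24"
  "gadd G21 G4 = G20"
  "gadd G21 G5 = G1"
  "gadd G21 G6 = G2"
  "gadd G21 G7 = G3"
  "gadd G21 G8 = G4"
  "gadd G21 G9 = G0"
  "gadd G21 G10 = G6"
  "gadd G21 G11 = G7"
  "gadd G21 G12 = G8"
  "gadd G21 G13 = G9"
  "gadd G21 G14 = G5"
  "gadd G21 G15 = G11"
  "gadd G21 G16 = G12"
  "gadd G21 G17 = G13"
  "gadd G21 G18 = G14"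
  "gadd G21 G19 = G10"
  "gadd G21 G20 = G16"
  "gadd G21 G21 = G17"
  "gadd G21 G22 = G18"
  "gadd G21 G23 = G19"
  "gadd G21 G24 = G15"
  "gadd G22 G0 = G22"
  "gadd G22 G1 = G23"
  "gadd G22 G2 = G24"
  "gadd G22 G3 = G20"
  "gadd G22 G4 = G21"
  "gadd G22 G5 = G2"
  "gadd G22 G6 = G3"
  "gadd G22 G7 = G4"
  "gadd G22 G8 = G0"
  "gadd G22 G9 = G1"
  "gadd G22 G10 = G7"
  "gadd G22 G11 = G8"
  "gadd G22 G12 = G9"
  "gadd G22 G13 = G5"
  "gadd G22 G14 = G6"
  "gadd G22 G15 = G12"
  "gadd G22 G16 = G13"
  "gadd G22 G17 = G14"
  "gadd G22 G18 = G10"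
  "gadd G22 G19 = G11"
  "gadd G22 G20 = G17"
  "gadd G22 G21 = G18"
  "gadd G22 G22 = G19"
  "gadd G22 G23 = G15"
  "gadd G22 G24 = G16"
  "gadd G23 G0 = G23"
  "gadd G23 G1 = G24"
  "gadd G23 G2 = G20"
  "gadd G23 G3 = G21"
  "gadd G23 G4 = G22"
  "gadd G23 G5 = G3"
  "gadd G23 G6 = G4"
  "gadd G23 G7 = G0"
  "gadd G23 G8 = G1"
  "gadd G23 G9 = G2"
  "gadd G23 G10 = G8"
  "gadd G23 G11 = G9"
  "gadd G23 G12 = G5"
  "gadd G23 G13 = G6"
  "gadd G23 G14 = G7"
  "gadd G23 G15 = G13"
  "gadd G23 G16 = G14"
  "gadd G23 G17 = G10"
  "gadd G23 G18 = G11"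
  "gadd G23 G19 = G12"
  "gadd G23 G20 = G18"
  "gadd G23 G21 = G19"
  "gadd G23 G22 = G15"
  "gadd G23 G23 = G16"
  "gadd G23 G24 = G17"
  "gadd G24 G0 = G24"
  "gadd G24 G1 = G20"
  "gadd G24 G2 = G21"
  "gadd G24 G3 = G22"
  "gadd G24 G4 = G23"
  "gadd G24 G5 = G4"
  "gadd G24 G6 = G0"
  "gadd G24 G7 = G1"
  "gadd G24 G8 = G2"
  "gadd G24 G9 = G3"
  "gadd G24 G10 = G9"
  "gadd G24 G11 = G5"
  "gadd G24 G12 = G6"
  "gadd G24 G13 = G7"
  "gadd G24 G14 = G8"
  "gadd G24 G15 = G14"
  "gadd G24 G16 = G10"
  "gadd G24 G17 = G11"
  "gadd G24 G18 = G12"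
  "gadd G24 G19 = G13"
  "gadd G24 G20 = G19"
  "gadd G24 G21 = G15"
  "gadd G24 G22 = G16"
  "gadd G24 G23 = G17"
  "gadd G24 G24 = G18"
  by (simp_all add: gadd_def)

lemma gmul_simps[simp]:
  "gmul G0 G0 = G0"
  "gmul G0 G1 = G0"
  "gmul G0 G2 = G0"
  "gmul G0 G3 = G0"
  "gmul G0 G4 = G0"
  "gmul G0 G5 = G0"
  "gmul G0 G6 = G0"
  "gmul G0 G7 = G0"
  "gmul G0 G8 = G0"
  "gmul G0 G9 = G0"
  "gmul G0 G10 = G0"
  "gmul G0 G11 = G0"
  "gmul G0 G12 = G0"
  "gmul G0 G13 = G0"
  "gmul G0 G14 = G0"
  "gmul G0 G15 = G0"
  "gmul G0 G16 = G0"
  "gmul G0 G17 = G0"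
  "gmul G0 G18 = G0"
  "gmul G0 G19 = G0"
  "gmul G0 G20 = G0"
  "gmul G0 G21 = G0"
  "gmul G0 G22 = G0"
  "gmul G0 G23 = G0"
  "gmul G0 G24 = G0"
  "gmul G1 G0 = G0"
  "gmul G1 G1 = G1"
  "gmul G1 G2 = G2"
  "gmul G1 G3 = G3"
  "gmul G1 G4 = G4"
  "gmul G1 G5 = G5"
  "gmul G1 G6 = G6"
  "gmul G1 G7 = G7"
  "gmul G1 G8 = G8"
  "gmul G1 G9 = G9"
  "gmul G1 G10 = G10"
  "gmul G1 G11 = G11"
  "gmul G1 G12 = G12"
  "gmul G1 G13 = G13"
  "gmul G1 G14 = G14"
  "gmul G1 G15 = G15"
  "gmul G1 G16 = G16"
  "gmul G1 G17 = G17"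
  "gmul G1 G18 = G18"
  "gmul G1 G19 = G19"
  "gmul G1 G20 = G20"
  "gmul G1 G21 = G21"
  "gmul G1 G22 = G22"
  "gmul G1 G23 = G23"
  "gmul G1 G24 = G24"
  "gmul G2 G0 = G0"
  "gmul G2 G1 = G2"
  "gmul G2 G2 = G4"
  "gmul G2 G3 = G1"
  "gmul G2 G4 = G3"
  "gmul G2 G5 = G10"
  "gmul G2 G6 = G12"
  "gmul G2 G7 = G14"
  "gmul G2 G8 = G11"
  "gmul G2 G9 = G13"
  "gmul G2 G10 = G20"
  "gmul G2 G11 = G22"
  "gmul G2 G12 = G24"
  "gmul G2 G13 = G21"
  "gmul G2 G14 = G23"
  "gmul G2 G15 = G5"
  "gmul G2 G16 = G7"
  "gmul G2 G17 = G9"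
  "gmul G2 G18 = G6"
  "gmul G2 G19 = G8"
  "gmul G2 G20 = G15"
  "gmul G2 G21 = G17"
  "gmul G2 G22 = G19"
  "gmul G2 G23 = G16"
  "gmul G2 G24 = G18"
  "gmul G3 G0 = G0"
  "gmul G3 G1 = G3"
  "gmul G3 G2 = G1"
  "gmul G3 G3 = G4"
  "gmul G3 G4 = G2"
  "gmul G3 G5 = G15"
  "gmul G3 G6 = G18"
  "gmul G3 G7 = G16"
  "gmul G3 G8 = G19"
  "gmul G3 G9 = G17"
  "gmul G3 G10 = G5"
  "gmul G3 G11 = G8"
  "gmul G3 G12 = G6"
  "gmul G3 G13 = G9"
  "gmul G3 G14 = G7"
  "gmul G3 G15 = G20"
  "gmul G3 G16 = G23"
  "gmul G3 G17 = G21"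
  "gmul G3 G18 = G24"
  "gmul G3 G19 = G22"
  "gmul G3 G20 = G10"
  "gmul G3 G21 = G13"
  "gmul G3 G22 = G11"
  "gmul G3 G23 = G14"
  "gmul G3 G24 = G12"
  "gmul G4 G0 = G0"
  "gmul G4 G1 = G4"
  "gmul G4 G2 = G3"
  "gmul G4 G3 = G2"
  "gmul G4 G4 = G1"
  "gmul G4 G5 = G20"
  "gmul G4 G6 = G24"
  "gmul G4 G7 = G23"
  "gmul G4 G8 = G22"
  "gmul G4 G9 = G21"
  "gmul G4 G10 = G15"
  "gmul G4 G11 = G19"
  "gmul G4 G12 = G18"
  "gmul G4 G13 = G17"
  "gmul G4 G14 = G16"
  "gmul G4 G15 = G10"
  "gmul G4 G16 = G14"
  "gmul G4 G17 = G13"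
  "gmul G4 G18 = G12"
  "gmul G4 G19 = G11"
  "gmul G4 G20 = G5"
  "gmul G4 G21 = G9"
  "gmul G4 G22 = G8"
  "gmul G4 G23 = G7"
  "gmul G4 G24 = G6"
  "gmul G5 G0 = G0"
  "gmul G5 G1 = G5"
  "gmul G5 G2 = G10"
  "gmul G5 G3 = G15"
  "gmul G5 G4 = G20"
  "gmul G5 G5 = G2"
  "gmul G5 G6 = G7"
  "gmul G5 G7 = G12"
  "gmul G5 G8 = G17"
  "gmul G5 G9 = G22"
  "gmul G5 G10 = G4"
  "gmul G5 G11 = G9"
  "gmul G5 G12 = G14"
  "gmul G5 G13 = G19"
  "gmul G5 G14 = G24"
  "gmul G5 G15 = G1"
  "gmul G5 G16 = G6"
  "gmul G5 G17 = G11"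
  "gmul G5 G18 = G16"
  "gmul G5 G19 = G21"
  "gmul G5 G20 = G3"
  "gmul G5 G21 = G8"
  "gmul G5 G22 = G13"
  "gmul G5 G23 = G18"
  "gmul G5 G24 = G23"
  "gmul G6 G0 = G0"
  "gmul G6 G1 = G6"
  "gmul G6 G2 = G12"
  "gmul G6 G3 = G18"
  "gmul G6 G4 = G24"
  "gmul G6 G5 = G7"
  "gmul G6 G6 = G13"
  "gmul G6 G7 = G19"
  "gmul G6 G8 = G20"
  "gmul G6 G9 = G1"
  "gmul G6 G10 = G14"
  "gmul G6 G11 = G15"
  "gmul G6 G12 = G21"
  "gmul G6 G13 = G2"
  "gmul G6 G14 = G8"
  "gmul G6 G15 = G16"
  "gmul G6 G16 = G22"
  "gmul G6 G17 = G3"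
  "gmul G6 G18 = G9"
  "gmul G6 G19 = G10"
  "gmul G6 G20 = G23"
  "gmul G6 G21 = G4"
  "gmul G6 G22 = G5"
  "gmul G6 G23 = G11"
  "gmul G6 G24 = G17"
  "gmul G7 G0 = G0"
  "gmul G7 G1 = G7"
  "gmul G7 G2 = G14"
  "gmul G7 G3 = G16"
  "gmul G7 G4 = G23"
  "gmul G7 G5 = G12"
  "gmul G7 G6 = G19"
  "gmul G7 G7 = G21"
  "gmul G7 G8 = G3"
  "gmul G7 G9 = G5"
  "gmul G7 G10 = G24"
  "gmul G7 G11 = G1"
  "gmul G7 G12 = G8"
  "gmul G7 G13 = G10"
  "gmul G7 G14 = G17"
  "gmul G7 G15 = G6"
  "gmul G7 G16 = G13"
  "gmul G7 G17 = G15"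
  "gmul G7 G18 = G22"
  "gmul G7 G19 = G4"
  "gmul G7 G20 = G18"
  "gmul G7 G21 = G20"
  "gmul G7 G22 = G2"
  "gmul G7 G23 = G9"
  "gmul G7 G24 = G11"
  "gmul G8 G0 = G0"
  "gmul G8 G1 = G8"
  "gmul G8 G2 = G11"
  "gmul G8 G3 = G19"
  "gmul G8 G4 = G22"
  "gmul G8 G5 = G17"
  "gmul G8 G6 = G20"
  "gmul G8 G7 = G3"
  "gmul G8 G8 = G6"
  "gmul G8 G9 = G14"
  "gmul G8 G10 = G9"
  "gmul G8 G11 = G12"
  "gmul G8 G12 = G15"
  "gmul G8 G13 = G23"
  "gmul G8 G14 = G1"
  "gmul G8 G15 = G21"
  "gmul G8 G16 = G4"
  "gmul G8 G17 = G7"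
  "gmul G8 G18 = G10"
  "gmul G8 G19 = G18"
  "gmul G8 G20 = G13"
  "gmul G8 G21 = G16"
  "gmul G8 G22 = G24"
  "gmul G8 G23 = G2"
  "gmul G8 G24 = G5"
  "gmul G9 G0 = G0"
  "gmul G9 G1 = G9"
  "gmul G9 G2 = G13"
  "gmul G9 G3 = G17"
  "gmul G9 G4 = G21"
  "gmul G9 G5 = G22"
  "gmul G9 G6 = G1"
  "gmul G9 G7 = G5"
  "gmul G9 G8 = G14"
  "gmul G9 G9 = G18"
  "gmul G9 G10 = G19"
  "gmul G9 G11 = G23"
  "gmul G9 G12 = G2"
  "gmul G9 G13 = G6"
  "gmul G9 G14 = G10"
  "gmul G9 G15 = G11"
  "gmul G9 G16 = G15"
  "gmul G9 G17 = G24"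
  "gmul G9 G18 = G3"
  "gmul G9 G19 = G7"
  "gmul G9 G20 = G8"
  "gmul G9 G21 = G12"
  "gmul G9 G22 = G16"
  "gmul G9 G23 = G20"
  "gmul G9 G24 = G4"
  "gmul G10 G0 = G0"
  "gmul G10 G1 = G10"
  "gmul G10 G2 = G20"
  "gmul G10 G3 = G5"
  "gmul G10 G4 = G15"
  "gmul G10 G5 = G4"
  "gmul G10 G6 = G14"
  "gmul G10 G7 = G24"
  "gmul G10 G8 = G9"
  "gmul G10 G9 = G19"
  "gmul G10 G10 = G3"
  "gmul G10 G11 = G13"
  "gmul G10 G12 = G23"
  "gmul G10 G13 = G8"
  "gmul G10 G14 = G18"
  "gmul G10 G15 = G2"
  "gmul G10 G16 = G12"
  "gmul G10 G17 = G22"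
  "gmul G10 G18 = G7"
  "gmul G10 G19 = G17"
  "gmul G10 G20 = G1"
  "gmul G10 G21 = G11"
  "gmul G10 G22 = G21"
  "gmul G10 G23 = G6"
  "gmul G10 G24 = G16"
  "gmul G11 G0 = G0"
  "gmul G11 G1 = G11"
  "gmul G11 G2 = G22"
  "gmul G11 G3 = G8"
  "gmul G11 G4 = G19"
  "gmul G11 G5 = G9"
  "gmul G11 G6 = G15"
  "gmul G11 G7 = G1"
  "gmul G11 G8 = G12"
  "gmul G11 G9 = G23"
  "gmul G11 G10 = G13"
  "gmul G11 G11 = G24"
  "gmul G11 G12 = G5"
  "gmul G11 G13 = G16"
  "gmul G11 G14 = G2"
  "gmul G11 G15 = G17"
  "gmul G11 G16 = G3"
  "gmul G11 G17 = G14"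
  "gmul G11 G18 = G20"
  "gmul G11 G19 = G6"
  "gmul G11 G20 = G21"
  "gmul G11 G21 = G7"
  "gmul G11 G22 = G18"
  "gmul G11 G23 = G4"
  "gmul G11 G24 = G10"
  "gmul G12 G0 = G0"
  "gmul G12 G1 = G12"
  "gmul G12 G2 = G24"
  "gmul G12 G3 = G6"
  "gmul G12 G4 = G18"
  "gmul G12 G5 = G14"
  "gmul G12 G6 = G21"
  "gmul G12 G7 = G8"
  "gmul G12 G8 = G15"
  "gmul G12 G9 = G2"
  "gmul G12 G10 = G23"
  "gmul G12 G11 = G5"
  "gmul G12 G12 = G17"
  "gmul G12 G13 = G4"
  "gmul G12 G14 = G11"
  "gmul G12 G15 = G7"
  "gmul G12 G16 = G19"
  "gmul G12 G17 = G1"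
  "gmul G12 G18 = G13"
  "gmul G12 G19 = G20"
  "gmul G12 G20 = G16"
  "gmul G12 G21 = G3"
  "gmul G12 G22 = G10"
  "gmul G12 G23 = G22"
  "gmul G12 G24 = G9"
  "gmul G13 G0 = G0"
  "gmul G13 G1 = G13"
  "gmul G13 G2 = G21"
  "gmul G13 G3 = G9"
  "gmul G13 G4 = G17"
  "gmul G13 G5 = G19"
  "gmul G13 G6 = G2"
  "gmul G13 G7 = G10"
  "gmul G13 G8 = G23"
  "gmul G13 G9 = G6"
  "gmul G13 G10 = G8"
  "gmul G13 G11 = G16"
  "gmul G13 G12 = G4"
  "gmul G13 G13 = G12"
  "gmul G13 G14 = G20"
  "gmul G13 G15 = G22"
  "gmul G13 G16 = G5"
  "gmul G13 G17 = G18"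
  "gmul G13 G18 = G1"
  "gmul G13 G19 = G14"
  "gmul G13 G20 = G11"
  "gmul G13 G21 = G24"
  "gmul G13 G22 = G7"
  "gmul G13 G23 = G15"
  "gmul G13 G24 = G3"
  "gmul G14 G0 = G0"
  "gmul G14 G1 = G14"
  "gmul G14 G2 = G23"
  "gmul G14 G3 = G7"
  "gmul G14 G4 = G16"
  "gmul G14 G5 = G24"
  "gmul G14 G6 = G8"
  "gmul G14 G7 = G17"
  "gmul G14 G8 = G1"
  "gmul G14 G9 = G10"
  "gmul G14 G10 = G18"
  "gmul G14 G11 = G2"
  "gmul G14 G12 = G11"
  "gmul G14 G13 = G20"
  "gmul G14 G14 = G9"
  "gmul G14 G15 = G12"
  "gmul G14 G16 = G21"
  "gmul G14 G17 = G5"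
  "gmul G14 G18 = G19"
  "gmul G14 G19 = G3"
  "gmul G14 G20 = G6"
  "gmul G14 G21 = G15"
  "gmul G14 G22 = G4"
  "gmul G14 G23 = G13"
  "gmul G14 G24 = G22"
  "gmul G15 G0 = G0"
  "gmul G15 G1 = G15"
  "gmul G15 G2 = G5"
  "gmul G15 G3 = G20"
  "gmul G15 G4 = G10"
  "gmul G15 G5 = G1"
  "gmul G15 G6 = G16"
  "gmul G15 G7 = G6"
  "gmul G15 G8 = G21"
  "gmul G15 G9 = G11"
  "gmul G15 G10 = G2"
  "gmul G15 G11 = G17"
  "gmul G15 G12 = G7"
  "gmul G15 G13 = G22"
  "gmul G15 G14 = G12"
  "gmul G15 G15 = G3"
  "gmul G15 G16 = G18"
  "gmul G15 G17 = G8"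
  "gmul G15 G18 = G23"
  "gmul G15 G19 = G13"
  "gmul G15 G20 = G4"
  "gmul G15 G21 = G19"
  "gmul G15 G22 = G9"
  "gmul G15 G23 = G24"
  "gmul G15 G24 = G14"
  "gmul G16 G0 = G0"
  "gmul G16 G1 = G16"
  "gmul G16 G2 = G7"
  "gmul G16 G3 = G23"
  "gmul G16 G4 = G14"
  "gmul G16 G5 = G6"
  "gmul G16 G6 = G22"
  "gmul G16 G7 = G13"
  "gmul G16 G8 = G4"
  "gmul G16 G9 = G15"
  "gmul G16 G10 = G12"
  "gmul G16 G11 = G3"
  "gmul G16 G12 = G19"
  "gmul G16 G13 = G5"
  "gmul G16 G14 = G21"
  "gmul G16 G15 = G18"
  "gmul G16 G16 = G9"
  "gmul G16 G17 = G20"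
  "gmul G16 G18 = G11"
  "gmul G16 G19 = G2"
  "gmul G16 G20 = G24"
  "gmul G16 G21 = G10"
  "gmul G16 G22 = G1"
  "gmul G16 G23 = G17"
  "gmul G16 G24 = G8"
  "gmul G17 G0 = G0"
  "gmul G17 G1 = G17"
  "gmul G17 G2 = G9"
  "gmul G17 G3 = G21"
  "gmul G17 G4 = G13"
  "gmul G17 G5 = G11"
  "gmul G17 G6 = G3"
  "gmul G17 G7 = G15"
  "gmul G17 G8 = G7"
  "gmul G17 G9 = G24"
  "gmul G17 G10 = G22"
  "gmul G17 G11 = G14"
  "gmul G17 G12 = G1"
  "gmul G17 G13 = G18"
  "gmul G17 G14 = G5"
  "gmul G17 G15 = G8"
  "gmul G17 G16 = G20"
  "gmul G17 G17 = G12"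
  "gmul G17 G18 = G4"
  "gmul G17 G19 = G16"
  "gmul G17 G20 = G19"
  "gmul G17 G21 = G6"
  "gmul G17 G22 = G23"
  "gmul G17 G23 = G10"
  "gmul G17 G24 = G2"
  "gmul G18 G0 = G0"
  "gmul G18 G1 = G18"
  "gmul G18 G2 = G6"
  "gmul G18 G3 = G24"
  "gmul G18 G4 = G12"
  "gmul G18 G5 = G16"
  "gmul G18 G6 = G9"
  "gmul G18 G7 = G22"
  "gmul G18 G8 = G10"
  "gmul G18 G9 = G3"
  "gmul G18 G10 = G7"
  "gmul G18 G11 = G20"
  "gmul G18 G12 = G13"
  "gmul G18 G13 = G1"
  "gmul G18 G14 = G19"
  "gmul G18 G15 = G23"
  "gmul G18 G16 = G11"
  "gmul G18 G17 = G4"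
  "gmul G18 G18 = G17"
  "gmul G18 G19 = G5"
  "gmul G18 G20 = G14"
  "gmul G18 G21 = G2"
  "gmul G18 G22 = G15"
  "gmul G18 G23 = G8"
  "gmul G18 G24 = G21"
  "gmul G19 G0 = G0"
  "gmul G19 G1 = G19"
  "gmul G19 G2 = G8"
  "gmul G19 G3 = G22"
  "gmul G19 G4 = G11"
  "gmul G19 G5 = G21"
  "gmul G19 G6 = G10"
  "gmul G19 G7 = G4"
  "gmul G19 G8 = G18"
  "gmul G19 G9 = G7"
  "gmul G19 G10 = G17"
  "gmul G19 G11 = G6"
  "gmul G19 G12 = G20"
  "gmul G19 G13 = G14"
  "gmul G19 G14 = G3"
  "gmul G19 G15 = G13"
  "gmul G19 G16 = G2"
  "gmul G19 G17 = G16"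
  "gmul G19 G18 = G5"
  "gmul G19 G19 = G24"
  "gmul G19 G20 = G9"
  "gmul G19 G21 = G23"
  "gmul G19 G22 = G12"
  "gmul G19 G23 = G1"
  "gmul G19 G24 = G15"
  "gmul G20 G0 = G0"
  "gmul G20 G1 = G20"
  "gmul G20 G2 = G15"
  "gmul G20 G3 = G10"
  "gmul G20 G4 = G5"
  "gmul G20 G5 = G3"
  "gmul G20 G6 = G23"
  "gmul G20 G7 = G18"
  "gmul G20 G8 = G13"
  "gmul G20 G9 = G8"
  "gmul G20 G10 = G1"
  "gmul G20 G11 = G21"
  "gmul G20 G12 = G16"
  "gmul G20 G13 = G11"
  "gmul G20 G14 = G6"
  "gmul G20 G15 = G4"
  "gmul G20 G16 = G24"
  "gmul G20 G17 = G19"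
  "gmul G20 G18 = G14"
  "gmul G20 G19 = G9"
  "gmul G20 G20 = G2"
  "gmul G20 G21 = G22"
  "gmul G20 G22 = G17"
  "gmul G20 G23 = G12"
  "gmul G20 G24 = G7"
  "gmul G21 G0 = G0"
  "gmul G21 G1 = G21"
  "gmul G21 G2 = G17"
  "gmul G21 G3 = G13"
  "gmul G21 G4 = G9"
  "gmul G21 G5 = G8"
  "gmul G21 G6 = G4"
  "gmul G21 G7 = G20"
  "gmul G21 G8 = G16"
  "gmul G21 G9 = G12"
  "gmul G21 G10 = G11"
  "gmul G21 G11 = G7"
  "gmul G21 G12 = G3"
  "gmul G21 G13 = G24"
  "gmul G21 G14 = G15"
  "gmul G21 G15 = G19"
  "gmul G21 G16 = G10"
  "gmul G21 G17 = G6"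
  "gmul G21 G18 = G2"
  "gmul G21 G19 = G23"
  "gmul G21 G20 = G22"
  "gmul G21 G21 = G18"
  "gmul G21 G22 = G14"
  "gmul G21 G23 = G5"
  "gmul G21 G24 = G1"
  "gmul G22 G0 = G0"
  "gmul G22 G1 = G22"
  "gmul G22 G2 = G19"
  "gmul G22 G3 = G11"
  "gmul G22 G4 = G8"
  "gmul G22 G5 = G13"
  "gmul G22 G6 = G5"
  "gmul G22 G7 = G2"
  "gmul G22 G8 = G24"
  "gmul G22 G9 = G16"
  "gmul G22 G10 = G21"
  "gmul G22 G11 = G18"
  "gmul G22 G12 = G10"
  "gmul G22 G13 = G7"
  "gmul G22 G14 = G4"
  "gmul G22 G15 = G9"
  "gmul G22 G16 = G1"
  "gmul G22 G17 = G23"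
  "gmul G22 G18 = G15"
  "gmul G22 G19 = G12"
  "gmul G22 G20 = G17"
  "gmul G22 G21 = G14"
  "gmul G22 G22 = G6"
  "gmul G22 G23 = G3"
  "gmul G22 G24 = G20"
  "gmul G23 G0 = G0"
  "gmul G23 G1 = G23"
  "gmul G23 G2 = G16"
  "gmul G23 G3 = G14"
  "gmul G23 G4 = G7"
  "gmul G23 G5 = G18"
  "gmul G23 G6 = G11"
  "gmul G23 G7 = G9"
  "gmul G23 G8 = G2"
  "gmul G23 G9 = G20"
  "gmul G23 G10 = G6"
  "gmul G23 G11 = G4"
  "gmul G23 G12 = G22"
  "gmul G23 G13 = G15"
  "gmul G23 G14 = G13"
  "gmul G23 G15 = G24"
  "gmul G23 G16 = G17"
  "gmul G23 G17 = G10"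
  "gmul G23 G18 = G8"
  "gmul G23 G19 = G1"
  "gmul G23 G20 = G12"
  "gmul G23 G21 = G5"
  "gmul G23 G22 = G3"
  "gmul G23 G23 = G21"
  "gmul G23 G24 = G19"
  "gmul G24 G0 = G0"
  "gmul G24 G1 = G24"
  "gmul G24 G2 = G18"
  "gmul G24 G3 = G12"
  "gmul G24 G4 = G6"
  "gmul G24 G5 = G23"
  "gmul G24 G6 = G17"
  "gmul G24 G7 = G11"
  "gmul G24 G8 = G5"
  "gmul G24 G9 = G4"
  "gmul G24 G10 = G16"
  "gmul G24 G11 = G10"
  "gmul G24 G12 = G9"
  "gmul G24 G13 = G3"
  "gmul G24 G14 = G22"
  "gmul G24 G15 = G14"
  "gmul G24 G16 = G8"
  "gmul G24 G17 = G2"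
  "gmul G24 G18 = G21"
  "gmul G24 G19 = G15"
  "gmul G24 G20 = G7"
  "gmul G24 G21 = G1"
  "gmul G24 G22 = G20"
  "gmul G24 G23 = G19"
  "gmul G24 G24 = G13"
  by (simp_all add: gmul_def)

definition GL :: "g list" where "GL = [G0, G1, G2, G3, G4, G5, G6, G7, G8, G9, G10, G11, G12, G13, G14, G15, G16, G17, G18, G19, G20, G21, G22, G23, G24]"

definition arcG :: "(g \<times> g) list" where "arcG = [(G10,G17), (G20,G1), (G2,G15), (G1,G11), (G9,G19), (G8,G18), (G20,G15), (G19,G1), (G12,G5), (G0,G3), (G16,G21), (G24,G10), (G5,G3), (G2,G18), (G1,G0), (G0,G20), (G18,G8), (G11,G0), (G5,G5), (G24,G11), (G2,G23), (G16,G2), (G9,G4), (G21,G5), (G15,G12), (G6,G2), (G6,G19), (G6,G4), (G11,G1), (G21,G21), (G23,G20), (G0,G11), (G15,G15), (G16,G12), (G5,G2), (G19,G0), (G24,G21), (G20,G8), (G9,G6)]"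

lemma arcG_first3: "arcG ! 0 = (G10,G17)" "arcG ! 1 = (G20,G1)" "arcG ! 2 = (G2,G15)"
  by (simp_all add: arcG_def)


lemma tp_gmul: "tp (gmul x y) = ((fst (tp x) * fst (tp y) + 2 * (snd (tp x) * snd (tp y))) mod 5, (fst (tp x) * snd (tp y) + snd (tp x) * fst (tp y)) mod 5)"
  by (cases x; cases y; simp add: tp_def)

lemma tp_gadd: "tp (gadd x y) = ((fst (tp x) + fst (tp y)) mod 5, (snd (tp x) + snd (tp y)) mod 5)"
  by (cases x; cases y; simp add: tp_def)

lemma tp_lt: "fst (tp x) < 5" "snd (tp x) < 5"
  by (cases x; simp add: tp_def)+

lemma tp_zero: "tp x = (0,0) \<Longrightarrow> x = G0"
  by (cases x) (simp_all add: tp_def)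

lemma tp_G: "tp G0 = (0,0)" "tp G1 = (1,0)" "tp G4 = (4,0)"
  by (simp_all add: tp_def)

lemma sub_zero: "gadd x (gmul G4 y) = G0 \<Longrightarrow> x = y"
  by (cases x; cases y; simp)

lemma UNIV_g: "(UNIV :: g set) = set GL"
proof -
  have "x \<in> set GL" for x by (cases x) (simp_all add: GL_def)
  then show ?thesis by auto
qed

lemma card_g: "card (UNIV :: g set) = 25"
proof -
  have "distinct GL" by (simp add: GL_def)
  then have "card (set GL) = length GL" by (rule distinct_card)
  then show ?thesis by (simp add: UNIV_g GL_def)
qed

lemma chk1: "list_all (\<lambda>a. list_all (\<lambda>b. length (filter (\<lambda>(y,z). gadd (gadd G1 (gmul a y)) (gmul b z) = G0) arcG) \<le> 3) GL) GL"
  by (simp add: GL_def arcG_def)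

lemma chk2: "list_all (\<lambda>b. length (filter (\<lambda>(y,z). gadd y (gmul b z) = G0) arcG) \<le> 3) GL"
  by (simp add: GL_def arcG_def)

lemma chk3: "length (filter (\<lambda>(y,z). z = G0) arcG) \<le> 3"
  by (simp add: arcG_def)

lemma arcG_distinct: "distinct arcG"
  by (simp add: arcG_def)

lemma arcG_length: "length arcG = 39"
  by (simp add: arcG_def)

lemma coll_conc: "gadd G12 G19 = G1" "gadd (gmul G12 G10) (gmul G19 G20) = G2"
  "gadd (gmul G12 G17) (gmul G19 G1) = G15"
  by simp_all

locale L25 =
  fixes w :: "'a::{field,finite}"
  assumes ch: "CHAR('a) = 5" and w2: "w * w = 2" and card: "card (UNIV :: 'a set) = 25"
begin

definition phi :: "g \<Rightarrow> 'a" where "phi x = of_nat (fst (tp x)) + of_nat (snd (tp x)) * w"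

lemma eq: "(of_nat m :: 'a) = of_nat n \<longleftrightarrow> m mod 5 = n mod 5"
  using ofnat_eq5[OF ch] .

lemma mod5: "(of_nat (n mod 5) :: 'a) = of_nat n"
  by (subst eq) simp

lemma five: "(5 :: 'a) = 0"
  using eq[of 5 0] by simp

lemma phi_add: "phi (gadd x y) = phi x + phi y"
  unfolding phi_def tp_gadd by (simp add: mod5 algebra_simps)

lemma phi_mul: "phi (gmul x y) = phi x * phi y"
proof -
  obtain a b where ab: "tp x = (a,b)" by (cases "tp x")
  obtain c d where cd: "tp y = (c,d)" by (cases "tp y")
  have "(of_nat a + of_nat b * w) * (of_nat c + of_nat d * w) =
        (of_nat a * of_nat c + of_nat b * of_nat d * (w*w)) + (of_nat a * of_nat d + of_nat b * of_nat c) * w"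
    by (simp add: algebra_simps)
  also have "\<dots> = of_nat (a*c + 2*(b*d)) + of_nat (a*d+b*c) * w" using w2 by simp
  finally have *: "(of_nat a + of_nat b * w) * (of_nat c + of_nat d * w) = of_nat (a*c + 2*(b*d)) + of_nat (a*d+b*c) * w" .
  show ?thesis unfolding phi_def tp_gmul ab cd fst_conv snd_conv mod5 using * by simp
qed

lemma phi_G0: "phi G0 = 0" and phi_G1: "phi G1 = 1"
  by (simp_all add: phi_def tp_G)

lemma phi_G4: "phi G4 = -1"
proof -
  have "(4::'a) + 1 = 5" by simp
  then have "(4::'a) + 1 = 0" using five by simp
  then show ?thesis by (simp add: phi_def tp_G eq_neg_iff_add_eq_0)
qed

lemma noF: "w \<noteq> of_nat k"
proof
  assume "w = of_nat k"
  then have "(of_nat (k*k) :: 'a) = of_nat 2" using w2 by simp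
  then have "(k*k) mod 5 = 2 mod 5" by (simp only: eq)
  then have h: "(k*k) mod 5 = 2" by simp
  have "(k*k) mod 5 = ((k mod 5) * (k mod 5)) mod 5" by (simp add: mod_mult_eq)
  moreover have "k mod 5 = 0 \<or> k mod 5 = 1 \<or> k mod 5 = 2 \<or> k mod 5 = 3 \<or> k mod 5 = 4" by arith
  ultimately show False using h by auto
qed

lemma phi_zero: "phi x = 0 \<Longrightarrow> x = G0"
proof -
  assume hx: "phi x = 0"
  obtain a b where ab: "tp x = (a,b)" by (cases "tp x")
  have lt: "a < 5" "b < 5" using tp_lt[of x] ab by auto
  have h: "of_nat a + of_nat b * w = 0" using hx ab by (simp add: phi_def)
  show ?thesis
  proof (cases "b = 0")
    case True
    then have "(of_nat a :: 'a) = of_nat 0" using h by simp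
    then have "a mod 5 = 0 mod 5" by (simp only: eq)
    then have "a = 0" using lt by simp
    then show ?thesis using tp_zero ab True by simp
  next
    case False
    have "b mod 5 \<noteq> 0" using False lt by simp
    then have b4m: "b^4 mod 5 = 1 mod 5" using pow4_mod5 by simp
    have b4: "(of_nat (b^4) :: 'a) = of_nat 1" by (subst eq) (rule b4m)
    have "w = w * of_nat (b^4)" using b4 by simp
    also have "\<dots> = (w * of_nat b) * of_nat (b^3)"
      by (simp add: power_numeral_reduce mult.assoc)
    also have "w * of_nat b = - of_nat a" using h by (simp add: algebra_simps eq_neg_iff_add_eq_0)
    also have "- of_nat a * of_nat (b^3) = (of_nat (4 * (a * b^3)) :: 'a) - 5 * of_nat (a * b^3)"
      by (simp add: algebra_simps)
    also have "\<dots> = of_nat (4 * (a * b^3))" using five by simp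
    finally show ?thesis using noF by blast
  qed
qed

lemma phi_zero_iff: "phi x = 0 \<longleftrightarrow> x = G0"
  using phi_zero phi_G0 by blast

lemma phi_inj: "phi x = phi y \<Longrightarrow> x = y"
proof -
  assume "phi x = phi y"
  then have "phi (gadd x (gmul G4 y)) = 0" by (simp add: phi_add phi_mul phi_G4)
  then show ?thesis using phi_zero sub_zero by blast
qed

lemma phi_surj: "\<exists>x. phi x = z"
proof -
  have inj: "inj phi" by (rule injI) (rule phi_inj)
  have "card (range phi) = 25" using card_image[OF inj] card_g by simp
  then have "range phi = UNIV" using card by (intro card_subset_eq) auto
  then show ?thesis by (metis UNIV_I imageE)
qed

definition emb :: "g \<times> g \<Rightarrow> 'a vec3" where "emb p = (1, phi (fst p), phi (snd p))"

lemma emb_nz: "emb p \<noteq> zero3" by (simp add: emb_def zero3_def)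

lemma emb_span1: "emb q \<in> span1 (emb p) \<Longrightarrow> q = p"
proof -
  assume "emb q \<in> span1 (emb p)"
  then obtain c where "emb q = smult3 c (emb p)" by (auto simp: span1_def)
  then have "1 = c" "phi (fst q) = c * phi (fst p)" "phi (snd q) = c * phi (snd p)"
    by (simp_all add: emb_def smult3_def)
  then have "fst q = fst p" "snd q = snd p" using phi_inj by auto
  then show ?thesis by (simp add: prod_eq_iff)
qed

lemma pt_inj: "span1 (emb p) = span1 (emb q) \<Longrightarrow> p = q"
  using emb_span1 self_span1 by metis

lemma count_le3:
  assumes "n \<noteq> zero3"
  shows "card {p \<in> set arcG. dot3 n (emb p) = 0} \<le> 3"
proof -
  have fin: "\<And>P. card {p \<in> set arcG. P p} \<le> length (filter P arcG)"
  proof -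
    fix P
    have "{p \<in> set arcG. P p} = set (filter P arcG)" by auto
    then show "card {p \<in> set arcG. P p} \<le> length (filter P arcG)"
      using card_length[of "filter P arcG"] by (simp only:)
  qed
  have allGL: "\<And>x. x \<in> set GL" using UNIV_g by auto
  from normalize3[OF assms] show ?thesis
  proof (elim disjE exE)
    fix a b assume h: "\<forall>v. dot3 n v = 0 \<longleftrightarrow> dot3 (1,a,b) v = 0"
    obtain a' where a': "phi a' = a" using phi_surj by blast
    obtain b' where b': "phi b' = b" using phi_surj by blast
    have "\<And>p. dot3 n (emb p) = 0 \<longleftrightarrow> (\<lambda>(y,z). gadd (gadd G1 (gmul a' y)) (gmul b' z) = G0) p"
    proof -
      fix p :: "g \<times> g"
      obtain y z where p: "p = (y,z)" by (cases p)
      have e: "dot3 (1,a,b) (emb p) = phi (gadd (gadd G1 (gmul a' y)) (gmul b' z))"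
        by (simp add: p emb_def dot3_def phi_add phi_mul phi_G1 a' b')
      have hv: "dot3 n (emb p) = 0 \<longleftrightarrow> dot3 (1,a,b) (emb p) = 0" using h by blast
      show "dot3 n (emb p) = 0 \<longleftrightarrow> (\<lambda>(y,z). gadd (gadd G1 (gmul a' y)) (gmul b' z) = G0) p"
        by (simp only: hv e phi_zero_iff) (simp add: p)
    qed
    then have "{p \<in> set arcG. dot3 n (emb p) = 0} = {p \<in> set arcG. (\<lambda>(y,z). gadd (gadd G1 (gmul a' y)) (gmul b' z) = G0) p}"
      by blast
    then have "card {p \<in> set arcG. dot3 n (emb p) = 0} = card {p \<in> set arcG. (\<lambda>(y,z). gadd (gadd G1 (gmul a' y)) (gmul b' z) = G0) p}"
      by (rule arg_cong)
    also have "\<dots> \<le> length (filter (\<lambda>(y,z). gadd (gadd G1 (gmul a' y)) (gmul b' z) = G0) arcG)" by (rule fin)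
    also have "\<dots> \<le> 3"
      using chk1 allGL by (simp add: list_all_iff)
    finally show ?thesis .
  next
    fix b assume h: "\<forall>v. dot3 n v = 0 \<longleftrightarrow> dot3 (0,1,b) v = 0"
    obtain b' where b': "phi b' = b" using phi_surj by blast
    have "\<And>p. dot3 n (emb p) = 0 \<longleftrightarrow> (\<lambda>(y,z). gadd y (gmul b' z) = G0) p"
    proof -
      fix p :: "g \<times> g"
      obtain y z where p: "p = (y,z)" by (cases p)
      have e: "dot3 (0,1,b) (emb p) = phi (gadd y (gmul b' z))"
        by (simp add: p emb_def dot3_def phi_add phi_mul b')
      have hv: "dot3 n (emb p) = 0 \<longleftrightarrow> dot3 (0,1,b) (emb p) = 0" using h by blast
      show "dot3 n (emb p) = 0 \<longleftrightarrow> (\<lambda>(y,z). gadd y (gmul b' z) = G0) p"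
        by (simp only: hv e phi_zero_iff) (simp add: p)
    qed
    then have "{p \<in> set arcG. dot3 n (emb p) = 0} = {p \<in> set arcG. (\<lambda>(y,z). gadd y (gmul b' z) = G0) p}"
      by blast
    then have "card {p \<in> set arcG. dot3 n (emb p) = 0} = card {p \<in> set arcG. (\<lambda>(y,z). gadd y (gmul b' z) = G0) p}"
      by (rule arg_cong)
    also have "\<dots> \<le> length (filter (\<lambda>(y,z). gadd y (gmul b' z) = G0) arcG)" by (rule fin)
    also have "\<dots> \<le> 3"
      using chk2 allGL by (simp add: list_all_iff)
    finally show ?thesis .
  next
    assume h: "\<forall>v. dot3 n v = 0 \<longleftrightarrow> dot3 (0,0,1) v = 0"
    have "\<And>p. dot3 n (emb p) = 0 \<longleftrightarrow> (\<lambda>(y,z). z = G0) p"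
    proof -
      fix p :: "g \<times> g"
      obtain y z where p: "p = (y,z)" by (cases p)
      have e: "dot3 (0,0,1) (emb p) = phi z"
        by (simp add: p emb_def dot3_def)
      have hv: "dot3 n (emb p) = 0 \<longleftrightarrow> dot3 (0,0,1) (emb p) = 0" using h by blast
      show "dot3 n (emb p) = 0 \<longleftrightarrow> (\<lambda>(y,z). z = G0) p"
        by (simp only: hv e phi_zero_iff) (simp add: p)
    qed
    then have "{p \<in> set arcG. dot3 n (emb p) = 0} = {p \<in> set arcG. (\<lambda>(y,z). z = G0) p}"
      by blast
    then have "card {p \<in> set arcG. dot3 n (emb p) = 0} = card {p \<in> set arcG. (\<lambda>(y,z). z = G0) p}"
      by (rule arg_cong)
    also have "\<dots> \<le> length (filter (\<lambda>(y,z). z = G0) arcG)" by (rule fin)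
    also have "\<dots> \<le> 3" by (rule chk3)
    finally show ?thesis .
  qed
qed

definition Barc :: "'a vec3 set set" where "Barc = (\<lambda>p. span1 (emb p)) ` set arcG"

lemma Barc_card: "card Barc = 39"
proof -
  have "inj_on (\<lambda>p. span1 (emb p)) (set arcG)" by (rule inj_onI) (rule pt_inj)
  then have "card Barc = card (set arcG)" unfolding Barc_def by (rule card_image)
  also have "\<dots> = 39" using distinct_card[OF arcG_distinct] arcG_length by simp
  finally show ?thesis .
qed

lemma Barc_line_le: "L \<in> pg_lines \<Longrightarrow> card {P \<in> Barc. P \<subseteq> L} \<le> 3"
proof -
  assume "L \<in> pg_lines"
  then obtain u v where L: "L = span2 u v" and u: "u \<noteq> zero3" and v: "v \<notin> span1 u"
    by (auto simp: pg_lines_def)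
  define n where "n = cross3 u v"
  have nz: "n \<noteq> zero3" using cross_nz[OF u v] n_def by simp
  have "{P \<in> Barc. P \<subseteq> L} \<subseteq> (\<lambda>p. span1 (emb p)) ` {p \<in> set arcG. dot3 n (emb p) = 0}"
  proof
    fix P assume "P \<in> {P \<in> Barc. P \<subseteq> L}"
    then obtain p where p: "p \<in> set arcG" "P = span1 (emb p)" and sub: "P \<subseteq> L"
      by (auto simp: Barc_def)
    have "emb p \<in> L" using sub p self_span1 by blast
    then have "dot3 n (emb p) = 0" unfolding L n_def by (rule mem_span2_dot)
    then show "P \<in> (\<lambda>p. span1 (emb p)) ` {p \<in> set arcG. dot3 n (emb p) = 0}" using p by auto
  qed
  then have "card {P \<in> Barc. P \<subseteq> L} \<le> card ((\<lambda>p. span1 (emb p)) ` {p \<in> set arcG. dot3 n (emb p) = 0})"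
    by (intro card_mono) auto
  also have "\<dots> \<le> card {p \<in> set arcG. dot3 n (emb p) = 0}" by (rule card_image_le) auto
  also have "\<dots> \<le> 3" by (rule count_le3[OF nz])
  finally show ?thesis .
qed

lemma Barc_line_eq: "\<exists>L\<in>pg_lines. card {P \<in> Barc. P \<subseteq> L} = 3"
proof -
  define p0 where "p0 = (G10, G17)"
  define p1 where "p1 = (G20, G1)"
  define p2 where "p2 = (G2, G15)"
  have mem: "p0 \<in> set arcG" "p1 \<in> set arcG" "p2 \<in> set arcG"
    unfolding p0_def p1_def p2_def by (simp_all add: arcG_def)
  have neq: "p0 \<noteq> p1" "p0 \<noteq> p2" "p1 \<noteq> p2"
    unfolding p0_def p1_def p2_def by simp_all
  define L where "L = span2 (emb p0) (emb p1)"
  have L_line: "L \<in> pg_lines"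
  proof -
    have "emb p1 \<notin> span1 (emb p0)" using emb_span1 neq by blast
    then show ?thesis unfolding L_def pg_lines_def using emb_nz by blast
  qed
  have e2: "emb p2 = add3 (smult3 (phi G12) (emb p0)) (smult3 (phi G19) (emb p1))"
  proof -
    have "phi G12 + phi G19 = 1" by (metis coll_conc(1) phi_add phi_G1)
    moreover have "phi G12 * phi G10 + phi G19 * phi G20 = phi G2"
      by (metis coll_conc(2) phi_add phi_mul)
    moreover have "phi G12 * phi G17 + phi G19 * phi G1 = phi G15"
      by (metis coll_conc(3) phi_add phi_mul)
    ultimately show ?thesis
      unfolding p0_def p1_def p2_def by (simp add: emb_def add3_def smult3_def)
  qed
  have sub0: "span1 (emb p0) \<subseteq> L"
  proof
    fix x assume "x \<in> span1 (emb p0)"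
    then obtain c where "x = smult3 c (emb p0)" by (auto simp: span1_def)
    then have "x = add3 (smult3 c (emb p0)) (smult3 0 (emb p1))"
      by (simp add: emb_def add3_def smult3_def)
    then show "x \<in> L" unfolding L_def span2_def by blast
  qed
  have sub1: "span1 (emb p1) \<subseteq> L"
  proof
    fix x assume "x \<in> span1 (emb p1)"
    then obtain c where "x = smult3 c (emb p1)" by (auto simp: span1_def)
    then have "x = add3 (smult3 0 (emb p0)) (smult3 c (emb p1))"
      by (simp add: emb_def add3_def smult3_def)
    then show "x \<in> L" unfolding L_def span2_def by blast
  qed
  have sub2: "span1 (emb p2) \<subseteq> L"
  proof
    fix x assume "x \<in> span1 (emb p2)"
    then obtain c where "x = smult3 c (emb p2)" by (auto simp: span1_def)
    then have "x = add3 (smult3 (c * phi G12) (emb p0)) (smult3 (c * phi G19) (emb p1))"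
      unfolding e2 by (simp add: emb_def add3_def smult3_def algebra_simps)
    then show "x \<in> L" unfolding L_def span2_def by blast
  qed
  have three: "{span1 (emb p0), span1 (emb p1), span1 (emb p2)} \<subseteq> {P \<in> Barc. P \<subseteq> L}"
    using mem sub0 sub1 sub2 unfolding Barc_def by auto
  have d: "span1 (emb p0) \<noteq> span1 (emb p1)" "span1 (emb p0) \<noteq> span1 (emb p2)"
    "span1 (emb p1) \<noteq> span1 (emb p2)" using neq pt_inj by blast+
  have c3: "card {span1 (emb p0), span1 (emb p1), span1 (emb p2)} = 3"
    using d by simp
  have fin: "finite {P \<in> Barc. P \<subseteq> L}" unfolding Barc_def by simp
  have "3 \<le> card {P \<in> Barc. P \<subseteq> L}" using card_mono[OF fin three] c3 by simp
  moreover have "card {P \<in> Barc. P \<subseteq> L} \<le> 3" by (rule Barc_line_le[OF L_line])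
  ultimately show ?thesis using L_line by (intro bexI[of _ L]) auto
qed

lemma Barc_arc: "is_arc 39 3 Barc"
  unfolding is_arc_def
proof (intro conjI)
  show "Barc \<subseteq> pg_points" unfolding Barc_def pg_points_def using emb_nz by blast
  show "finite Barc" unfolding Barc_def by simp
  show "card Barc = 39" by (rule Barc_card)
  show "\<forall>L\<in>pg_lines. card {P \<in> Barc. P \<subseteq> L} \<le> 3" using Barc_line_le by blast
  show "\<exists>L\<in>pg_lines. card {P \<in> Barc. P \<subseteq> L} = 3" by (rule Barc_line_eq)
qed

end

theorem mainTheorem11:
  assumes "card (UNIV :: 'a::{field,finite} set) = 25"
  shows "(\<exists>B :: 'a vec3 set set. is_arc 39 3 B) \<and> 39 \<le> arc_max 3 TYPE('a)"
proof -
  have ch: "CHAR('a) = 5" by (rule char5[OF assms])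
  obtain w :: 'a where w: "w * w = 2" using exists_w[OF assms ch] by blast
  interpret L25 w using ch w assms by unfold_locales
  have ex: "\<exists>B :: 'a vec3 set set. is_arc 39 3 B" using Barc_arc by blast
  have bdd: "bdd_above {n. \<exists>B :: 'a vec3 set set. is_arc n 3 B}"
  proof (rule bdd_aboveI)
    fix n assume "n \<in> {n. \<exists>B :: 'a vec3 set set. is_arc n 3 B}"
    then obtain B :: "'a vec3 set set" where "is_arc n 3 B" by blast
    then have "n = card B" by (simp add: is_arc_def)
    also have "\<dots> \<le> card (UNIV :: 'a vec3 set set)" by (rule card_mono) auto
    finally show "n \<le> card (UNIV :: 'a vec3 set set)" .
  qed
  have "39 \<le> Sup {n. \<exists>B :: 'a vec3 set set. is_arc n 3 B}"
    by (rule cSup_upper) (use ex bdd in auto)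
  then show ?thesis using ex by (simp add: arc_max_def)
qed

end
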